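(* Define rooted trees $L(k)$, $k\ge 0$, recursively: $L(0)$ is a single vertex (its root); for $k\ge 0$, $L(k+1)$ consists of a root $u$ with three children $v_1,v_2,v_3$, where each $v_i$ has exactly one child, and that child is the root of a copy of $L(k)$ (the three copies being disjoint). Then for every $k\ge 0$, $\mathrm{lmw}(L(k))=\mathrm{lmw}(L(k)^2)=k$.
   Context: All graphs are finite and simple. For a graph $G$, its square $G^2$ is the graph on $V(G)$ in which two distinct vertices are adjacent iff their distance in $G$ is at most $2$. For disjoint $S,T\subseteq V(G)$, $G[S,T]$ denotes the bipartite graph on $S\cup T$ whose edges are exactly the edges of $G$ with one endpoint in $S$ and the other in $T$. $\mathrm{mim}(H)$ is the maximum number of edges in an induced matching of $H$. A linear layout of an $n$-vertex graph $G$ is a bijection $\sigma:V(G)\to\{1,\dots,n\}$; write $v_i=\sigma^{-1}(i)$ and $V_i^\sigma=\{v_1,\dots,v_i\}$, $\overline{V_i^\sigma}=V(G)\setminus V_i^\sigma$. The MIM-width of $G$ under $\sigma$ is $\mathrm{mw}(\sigma,G)=\max_{1\le i<n}\mathrm{mim}(G[V_i^\sigma,\overline{V_i^\sigma}])$ (equal to $0$ if $n\le 1$). The linear MIM-width $\mathrm{lmw}(G)$ is the minimum of $\mathrm{mw}(\sigma,G)$ over all linear layouts $\sigma$ of $G$. *)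

theory Defs
  imports Main
begin

definition simple_graph :: "'a set \<Rightarrow> 'a set set \<Rightarrow> bool" where
  "simple_graph V E \<longleftrightarrow> finite V \<and> (\<forall>e\<in>E. \<exists>u v. u \<in> V \<and> v \<in> V \<and> u \<noteq> v \<and> e = {u, v})"

definition graph_square :: "'a set \<Rightarrow> 'a set set \<Rightarrow> 'a set set" where
  "graph_square V E = {{u, v} | u v. u \<in> V \<and> v \<in> V \<and> u \<noteq> v \<and>
      ({u, v} \<in> E \<or> (\<exists>w\<in>V. {u, w} \<in> E \<and> {w, v} \<in> E))}"

definition bip_edges :: "'a set set \<Rightarrow> 'a set \<Rightarrow> 'a set \<Rightarrow> 'a set set" where
  "bip_edges E S T = {e \<in> E. \<exists>s t. s \<in> S \<and> t \<in> T \<and> e = {s, t}}"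

definition induced_matching :: "'a set set \<Rightarrow> 'a set set \<Rightarrow> bool" where
  "induced_matching F M \<longleftrightarrow> M \<subseteq> F \<and>
     (\<forall>e\<in>M. \<forall>f\<in>M. e \<noteq> f \<longrightarrow> e \<inter> f = {} \<and> \<not> (\<exists>g\<in>F. g \<inter> e \<noteq> {} \<and> g \<inter> f \<noteq> {}))"

definition mim :: "'a set set \<Rightarrow> nat" where
  "mim F = Max (card ` {M. induced_matching F M})"

definition prefix_set :: "'a set \<Rightarrow> ('a \<Rightarrow> nat) \<Rightarrow> nat \<Rightarrow> 'a set" where
  "prefix_set V \<sigma> i = {v \<in> V. \<sigma> v \<le> i}"

definition linear_layout :: "'a set \<Rightarrow> ('a \<Rightarrow> nat) \<Rightarrow> bool" where
  "linear_layout V \<sigma> \<longleftrightarrow> bij_betw \<sigma> V {1..card V}"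

definition mim_width :: "'a set \<Rightarrow> 'a set set \<Rightarrow> ('a \<Rightarrow> nat) \<Rightarrow> nat" where
  "mim_width V E \<sigma> = Max (insert 0
     ((\<lambda>i. mim (bip_edges E (prefix_set V \<sigma> i) (V - prefix_set V \<sigma> i))) ` {1..<card V}))"

definition lmw :: "'a set \<Rightarrow> 'a set set \<Rightarrow> nat" where
  "lmw V E = Min {mim_width V E \<sigma> | \<sigma>. linear_layout V \<sigma>}"

text \<open>Vertices are encoded as lists (paths from the root [] );
L(k+1) has root [], children [i] (i = 0,1,2), each [i] has the single child [i,0],
which is the root of a copy of L(k) (vertices [i,0] @ w).\<close>
fun L_verts :: "nat \<Rightarrow> nat list set" where
  "L_verts 0 = {[]}"
| "L_verts (Suc k) = insert []
     (\<Union>i\<in>{0,1,2}. {[i], [i,0]} \<union> (\<lambda>w. [i,0] @ w) ` L_verts k)"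

definition L_edges :: "nat \<Rightarrow> nat list set set" where
  "L_edges k = {{x, x @ [c]} | x c. x \<in> L_verts k \<and> x @ [c] \<in> L_verts k}"

end

theory Submission
  imports Defs
begin


lemma nil_in_L[simp]: "[] \<in> L_verts k"
  by (cases k) auto

lemma le2_iff: "(i::nat) \<le> 2 \<longleftrightarrow> i = 0 \<or> i = 1 \<or> i = 2"
  by auto

lemma L_Suc_iff: "v \<in> L_verts (Suc k) \<longleftrightarrow> v = [] \<or> (\<exists>i\<le>2. v = [i]) \<or> (\<exists>i\<le>2. \<exists>w\<in>L_verts k. v = [i,0]@w)"
proof
  assume "v \<in> L_verts (Suc k)"
  then show "v = [] \<or> (\<exists>i\<le>2. v = [i]) \<or> (\<exists>i\<le>2. \<exists>w\<in>L_verts k. v = [i,0]@w)"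
    apply (simp only: L_verts.simps)
    apply (elim insertE UN_E UnE imageE; simp)
    done
next
  assume "v = [] \<or> (\<exists>i\<le>2. v = [i]) \<or> (\<exists>i\<le>2. \<exists>w\<in>L_verts k. v = [i,0]@w)"
  then show "v \<in> L_verts (Suc k)"
    by (auto simp: le2_iff image_iff)
qed

declare L_verts.simps(2)[simp del]

lemma L_copy_mem[simp]: "i#0#w \<in> L_verts (Suc k) \<longleftrightarrow> i \<le> 2 \<and> w \<in> L_verts k"
  by (auto simp: L_Suc_iff)

lemma L_pair_mem[simp]: "[i,0] \<in> L_verts (Suc k) \<longleftrightarrow> i \<le> 2"
  using L_copy_mem[of i "[]" k] by simp

lemma L_single_mem[simp]: "[i] \<in> L_verts (Suc k) \<longleftrightarrow> i \<le> 2"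
  by (auto simp: L_Suc_iff)

lemma finite_L[simp]: "finite (L_verts k)"
  by (induction k) (auto simp: L_verts.simps)

lemma L_Suc_eq: "L_verts (Suc k) = {[],[0],[1],[2]} \<union> ((@) [0,0]) ` L_verts k \<union> ((@) [1,0]) ` L_verts k \<union> ((@) [2,0]) ` L_verts k"
  apply (rule set_eqI)
  apply (simp only: L_Suc_iff Un_iff insert_iff image_iff)
  apply (auto simp: le2_iff)
  done

lemma card_L_Suc: "card (L_verts (Suc k)) = 3 * card (L_verts k) + 4"
proof -
  let ?n = "card (L_verts k)"
  have c: "card (((@) [i,0]) ` L_verts k) = ?n" for i :: nat
    by (rule card_image) (simp add: inj_on_def)
  have "card ({[],[0],[1],[2]} \<union> ((@) [0,0]) ` L_verts k \<union> ((@) [1,0]) ` L_verts k \<union> ((@) [2,0]) ` L_verts k)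
     = card ({[],[0],[1],[2]} \<union> ((@) [0,0]) ` L_verts k \<union> ((@) [1,0]) ` L_verts k) + ?n"
    by (subst card_Un_disjoint) (auto simp: card_image inj_on_def)
  also have "\<dots> = card ({[],[0],[1],[2]} \<union> ((@) [0,0]) ` L_verts k) + ?n + ?n"
    by (subst card_Un_disjoint) (auto simp: card_image inj_on_def)
  also have "\<dots> = 4 + ?n + ?n + ?n"
    by (subst card_Un_disjoint) (auto simp: card_image inj_on_def)
  finally show ?thesis by (simp only: L_Suc_eq)
qed

lemma take_L: "v \<in> L_verts n \<Longrightarrow> take j v \<in> L_verts n"
proof (induction n arbitrary: v j)
  case 0 then show ?case by simp
next
  case (Suc k)
  from Suc.prems consider "v = []" | i where "i \<le> 2" "v = [i]" | i w where "i\<le>2" "w \<in> L_verts k" "v = [i,0]@w"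
    unfolding L_Suc_iff by blast
  then show ?case
  proof cases
    case 1 then show ?thesis by simp
  next
    case 2 then show ?thesis by (cases j) (auto simp: L_single_mem)
  next
    case 3
    show ?thesis
    proof (cases "j \<le> 2")
      case True
      then have "j = 0 \<or> j = 1 \<or> j = 2" by auto
      then show ?thesis using 3
        by (auto simp: L_single_mem)
    next
      case False
      then obtain j' where "j = Suc (Suc j')" by (metis add_2_eq_Suc le_add2 le_add_diff_inverse nat_le_linear)
      then have "take j v = [i,0] @ take (j-2) w" using 3 by simp
      then show ?thesis using 3 Suc.IH by (simp add: L_copy_mem)
    qed
  qed
qed

definition adj :: "nat \<Rightarrow> nat list \<Rightarrow> nat list \<Rightarrow> bool" where
  "adj n u v \<longleftrightarrow> u \<in> L_verts n \<and> v \<in> L_verts n \<and> (\<exists>c. v = u@[c] \<or> u = v@[c])"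

lemma adj_sym: "adj n u v \<longleftrightarrow> adj n v u"
  unfolding adj_def by blast

lemma adj_neq: "adj n u v \<Longrightarrow> u \<noteq> v"
  unfolding adj_def by auto

lemma LE_mem: "{u,v} \<in> L_edges n \<longleftrightarrow> adj n u v"
  unfolding L_edges_def adj_def
  apply (rule iffI)
   apply (clarsimp simp: doubleton_eq_iff)
   apply blast
  apply (elim conjE exE disjE)
   apply blast
  apply (rule CollectI, rule exI[of _ v], rule exI, rule conjI[rotated], blast, auto)
  done

lemma LE_edge: "e \<in> L_edges n \<Longrightarrow> \<exists>u v. e = {u,v} \<and> adj n u v"
  unfolding L_edges_def adj_def by blast

lemma sq_mem: "{u,v} \<in> graph_square (L_verts n) (L_edges n) \<longleftrightarrow> u \<noteq> v \<and> (adj n u v \<or> (\<exists>w. adj n u w \<and> adj n w v))"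
  unfolding graph_square_def LE_mem
  apply (rule iffI)
   apply (clarsimp simp: doubleton_eq_iff LE_mem)
   apply (elim disjE; auto simp: LE_mem insert_commute adj_sym)
  apply (clarsimp)
  apply (elim disjE)
   apply (rule exI[of _ u], rule exI[of _ v]) apply (auto simp: LE_mem adj_def)[1]
  apply (elim exE)
  subgoal for w
   apply (rule exI[of _ u], rule exI[of _ v]) apply (auto simp: LE_mem adj_def)[1]
    done
  done

lemma sq_edge: "e \<in> graph_square (L_verts n) (L_edges n) \<Longrightarrow> \<exists>u v. e = {u,v} \<and> u \<noteq> v \<and> u \<in> L_verts n \<and> v \<in> L_verts n"
  unfolding graph_square_def by blast

lemma L_two_mem[simp]: "[i,c] \<in> L_verts (Suc k) \<longleftrightarrow> i \<le> 2 \<and> c = 0"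
  by (auto simp: L_Suc_iff)

lemma butlast_L: "v \<in> L_verts n \<Longrightarrow> butlast v \<in> L_verts n"
  by (simp add: butlast_conv_take take_L)

lemma adj_nil: "adj (Suc k) [] w \<longleftrightarrow> (\<exists>i\<le>2. w = [i])"
  unfolding adj_def by auto

lemma adj_single: "i \<le> 2 \<Longrightarrow> adj (Suc k) [i] w \<longleftrightarrow> w = [] \<or> w = [i,0]"
  unfolding adj_def
  apply (rule iffI)
   apply (auto simp: append_eq_Cons_conv)[1]
  apply auto
  done

lemma adj_copy: "i \<le> 2 \<Longrightarrow> adj (Suc k) (i#0#u) w \<longleftrightarrow> (\<exists>w0. w = i#0#w0 \<and> adj k u w0) \<or> (u = [] \<and> w = [i])"
proof
  assume a: "adj (Suc k) (i#0#u) w"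
  then have u: "u \<in> L_verts k" "w \<in> L_verts (Suc k)" unfolding adj_def by auto
  from a obtain c where "w = i#0#u@[c] \<or> i#0#u = w@[c]" unfolding adj_def by auto
  then show "(\<exists>w0. w = i#0#w0 \<and> adj k u w0) \<or> (u = [] \<and> w = [i])"
  proof
    assume "w = i#0#u@[c]"
    then show ?thesis using u unfolding adj_def by auto
  next
    assume h: "i#0#u = w@[c]"
    show ?thesis
    proof (cases "u = []")
      case True
      then show ?thesis using h u by (cases w) auto
    next
      case False
      then have ub: "u = butlast u @ [last u]" by simp
      then have "i#0#u = (i#0#butlast u) @ [last u]" by simp
      with h have "w = i#0#butlast u" "c = last u" by simp_all
      then show ?thesis using u butlast_L[of u k] ub unfolding adj_def by blast
    qed
  qed
next
  assume i: "i \<le> 2" and "(\<exists>w0. w = i#0#w0 \<and> adj k u w0) \<or> (u = [] \<and> w = [i])"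
  then show "adj (Suc k) (i#0#u) w"
    unfolding adj_def by auto
qed

lemma adj_copy2: "i \<le> 2 \<Longrightarrow> adj (Suc k) (i#0#u) (i#0#v) \<longleftrightarrow> adj k u v"
  by (simp add: adj_copy)

lemma LE_copy: "i \<le> 2 \<Longrightarrow> {i#0#u, i#0#v} \<in> L_edges (Suc k) \<longleftrightarrow> {u,v} \<in> L_edges k"
  by (simp add: LE_mem adj_copy2)

lemma SQ_copy: "i \<le> 2 \<Longrightarrow> {i#0#u, i#0#v} \<in> graph_square (L_verts (Suc k)) (L_edges (Suc k)) \<longleftrightarrow> {u,v} \<in> graph_square (L_verts k) (L_edges k)"
proof -
  assume i: "i \<le> 2"
  have "(\<exists>w. adj (Suc k) (i#0#u) w \<and> adj (Suc k) w (i#0#v)) \<longleftrightarrow> (\<exists>w. adj k u w \<and> adj k w v)" if "u \<noteq> v"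
  proof
    assume "\<exists>w. adj (Suc k) (i#0#u) w \<and> adj (Suc k) w (i#0#v)"
    then obtain w where w1: "adj (Suc k) (i#0#u) w" and w2: "adj (Suc k) w (i#0#v)" by blast
    from w1 i consider w0 where "w = i#0#w0" "adj k u w0" | "u = []" "w = [i]" by (auto simp: adj_copy)
    then show "\<exists>w. adj k u w \<and> adj k w v"
    proof cases
      case 1
      with w2 i show ?thesis by (auto simp: adj_sym[of _ "i#0#w0"] adj_copy2 adj_sym[of _ w0])
    next
      case 2
      with w2 have "adj (Suc k) [i] (i#0#v)" by simp
      then have "i#0#v = [] \<or> i#0#v = [i,0]" using adj_single[OF i] by blast
      then have "v = []" by simp
      with 2 that show ?thesis by simp
    qed
  next
    assume "\<exists>w. adj k u w \<and> adj k w v"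
    then obtain w where "adj k u w" "adj k w v" by blast
    then show "\<exists>w. adj (Suc k) (i#0#u) w \<and> adj (Suc k) w (i#0#v)"
      using i by (intro exI[of _ "i#0#w"]) (simp add: adj_copy2)
  qed
  then show ?thesis using i by (auto simp: sq_mem adj_copy2)
qed




lemma im_sub: assumes "induced_matching F M" "M' \<subseteq> M" shows "induced_matching F M'"
proof -
  have a: "M \<subseteq> F" and b: "\<And>e f. e\<in>M \<Longrightarrow> f\<in>M \<Longrightarrow> e\<noteq>f \<Longrightarrow> e\<inter>f={} \<and> \<not>(\<exists>g\<in>F. g \<inter> e \<noteq> {} \<and> g \<inter> f \<noteq> {})"
    using assms(1) unfolding induced_matching_def by blast+
  show ?thesis unfolding induced_matching_def
  proof (intro conjI ballI impI)
    show "M' \<subseteq> F" using a assms(2) by (rule order_trans[rotated])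
  next
    fix e f assume "e \<in> M'" "f \<in> M'" "e \<noteq> f"
    then have "e \<in> M" "f \<in> M" using assms(2) by auto
    from b[OF this \<open>e\<noteq>f\<close>] show "e\<inter>f={}" "\<not>(\<exists>g\<in>F. g \<inter> e \<noteq> {} \<and> g \<inter> f \<noteq> {})" by blast+
  qed
qed

lemma im_empty: "induced_matching F {}"
  unfolding induced_matching_def by simp

lemma im_finite: "finite F \<Longrightarrow> induced_matching F M \<Longrightarrow> finite M"
  unfolding induced_matching_def by (meson finite_subset)

lemma im_D: "induced_matching F M \<Longrightarrow> M \<subseteq> F"
  "induced_matching F M \<Longrightarrow> e\<in>M \<Longrightarrow> f\<in>M \<Longrightarrow> e\<noteq>f \<Longrightarrow> e\<inter>f={}"
  "induced_matching F M \<Longrightarrow> e\<in>M \<Longrightarrow> f\<in>M \<Longrightarrow> e\<noteq>f \<Longrightarrow> g \<in> F \<Longrightarrow> g \<inter> e \<noteq> {} \<Longrightarrow> g \<inter> f = {}"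
  unfolding induced_matching_def by blast+

lemma im_set_finite: "finite F \<Longrightarrow> finite {M. induced_matching F M}"
proof -
  assume f: "finite F"
  have "{M. induced_matching F M} \<subseteq> Pow F" using im_D(1) by blast
  then show ?thesis using f by (meson finite_Pow_iff finite_subset)
qed

lemma mim_ge: "finite F \<Longrightarrow> induced_matching F M \<Longrightarrow> card M \<le> mim F"
  unfolding mim_def by (rule Max_ge) (simp_all add: im_set_finite)

lemma mim_le: "finite F \<Longrightarrow> (\<And>M. induced_matching F M \<Longrightarrow> card M \<le> k) \<Longrightarrow> mim F \<le> k"
  unfolding mim_def
  apply (rule Max.boundedI)
    apply (simp add: im_set_finite)
   apply (use im_empty in blast)
  apply blast
  done

lemma mim_le_card: "finite F \<Longrightarrow> mim F \<le> card F"
  apply (rule mim_le, assumption)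
  apply (rule card_mono, assumption)
  apply (erule im_D(1))
  done

lemma im_pair:
  assumes im: "induced_matching (bip_edges F S T) M"
    and "e \<in> M" "f \<in> M" "e \<noteq> f" "e = {s,t}" "f = {s',t'}" "s \<in> S" "t \<in> T" "s' \<in> S" "t' \<in> T"
  shows "s \<noteq> s' \<and> t \<noteq> t' \<and> {s,t'} \<notin> F \<and> {s',t} \<notin> F"
proof -
  have d: "e \<inter> f = {}" using im_D(2)[OF im assms(2,3,4)] .
  have "{s,t'} \<notin> F"
  proof
    assume "{s,t'} \<in> F"
    then have "{s,t'} \<in> bip_edges F S T" using assms unfolding bip_edges_def by blast
    from im_D(3)[OF im assms(2,3,4) this] show False using assms(5,6) by auto
  qed
  moreover have "{s',t} \<notin> F"
  proof
    assume "{s',t} \<in> F"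
    then have "{s',t} \<in> bip_edges F S T" using assms unfolding bip_edges_def by blast
    from im_D(3)[OF im assms(3,2) assms(4)[symmetric] this] show False using assms(5,6) by auto
  qed
  moreover have "s \<noteq> s'" "t \<noteq> t'" using d assms(5,6) by auto
  ultimately show ?thesis by blast
qed

lemma im_insert:
  assumes im: "induced_matching F M" and eF: "e \<in> F"
    and h: "\<And>f. f \<in> M \<Longrightarrow> e \<inter> f = {} \<and> e \<noteq> f \<and> (\<forall>g\<in>F. g \<inter> e \<noteq> {} \<longrightarrow> g \<inter> f = {})"
  shows "induced_matching F (insert e M)"
  unfolding induced_matching_def
proof (intro conjI ballI impI)
  show "insert e M \<subseteq> F" using im_D(1)[OF im] eF by blast
next
  fix x y assume x: "x \<in> insert e M" and y: "y \<in> insert e M" and xy: "x \<noteq> y"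
  have "x \<inter> y = {} \<and> (\<forall>g\<in>F. g \<inter> x \<noteq> {} \<longrightarrow> g \<inter> y = {})"
  proof (cases "x = e")
    case True
    then have "y \<in> M" using y xy by blast
    then show ?thesis using h True by blast
  next
    case False
    then have xM: "x \<in> M" using x by blast
    show ?thesis
    proof (cases "y = e")
      case True
      have "e \<inter> x = {}" "\<forall>g\<in>F. g \<inter> e \<noteq> {} \<longrightarrow> g \<inter> x = {}" using h[OF xM] by blast+
      then show ?thesis using True by blast
    next
      case False
      then have "y \<in> M" using y by blast
      then show ?thesis using im_D(2,3)[OF im xM _ xy] by blast
    qed
  qed
  then show "x \<inter> y = {}" "\<not> (\<exists>g\<in>F. g \<inter> x \<noteq> {} \<and> g \<inter> y \<noteq> {})" by blast+
qed

lemma im_map_gen: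
  assumes inj: "inj_on f W"
    and F: "\<And>u v. u\<in>W \<Longrightarrow> v\<in>W \<Longrightarrow> {u,v} \<in> F0 \<Longrightarrow> {f u, f v} \<in> F1"
    and F': "\<And>u v. u\<in>W \<Longrightarrow> v\<in>W \<Longrightarrow> {f u, f v} \<in> F1 \<Longrightarrow> {u,v} \<in> F0"
    and F1d: "\<And>h. h \<in> F1 \<Longrightarrow> \<exists>x y. h = {x,y}"
    and S: "\<And>w. w\<in>W \<Longrightarrow> f w \<in> S1 \<longleftrightarrow> w \<in> S0"
    and T: "\<And>w. w\<in>W \<Longrightarrow> f w \<in> T1 \<longleftrightarrow> w \<in> T0"
    and ST: "S1 \<inter> T1 = {}"
    and im: "induced_matching (bip_edges F0 S0 T0) M"
    and MW: "\<And>e. e\<in>M \<Longrightarrow> e \<subseteq> W"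
  shows "induced_matching (bip_edges F1 S1 T1) ((`) f ` M) \<and> card ((`) f ` M) = card M"
proof
  have injM: "inj_on ((`) f) M"
    by (rule inj_onI) (metis MW inj inj_on_image_eq_iff)
  then show "card ((`) f ` M) = card M" by (rule card_image)
  show "induced_matching (bip_edges F1 S1 T1) ((`) f ` M)"
    unfolding induced_matching_def
  proof (intro conjI ballI impI)
    show "(`) f ` M \<subseteq> bip_edges F1 S1 T1"
    proof
      fix e1 assume "e1 \<in> (`) f ` M"
      then obtain e where eM: "e \<in> M" and e1: "e1 = f ` e" by blast
      then have "e \<in> bip_edges F0 S0 T0" using im_D(1)[OF im] by blast
      then obtain s t where st: "s \<in> S0" "t \<in> T0" "e = {s,t}" "e \<in> F0" unfolding bip_edges_def by blast
      have W: "s \<in> W" "t \<in> W" using MW[OF eM] st by auto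
      have "e1 = {f s, f t}" using e1 st by simp
      moreover have "{f s, f t} \<in> F1" using F[OF W] st by simp
      moreover have "f s \<in> S1" "f t \<in> T1" using S[OF W(1)] T[OF W(2)] st by auto
      ultimately show "e1 \<in> bip_edges F1 S1 T1" unfolding bip_edges_def by blast
    qed
  next
    fix e1 g1 assume e1: "e1 \<in> (`) f ` M" and g1: "g1 \<in> (`) f ` M" and ne: "e1 \<noteq> g1"
    obtain e where eM: "e \<in> M" and e1e: "e1 = f ` e" using e1 by blast
    obtain g where gM: "g \<in> M" and g1g: "g1 = f ` g" using g1 by blast
    have neg: "e \<noteq> g" using ne e1e g1g by blast
    have dis: "e \<inter> g = {}" using im_D(2)[OF im eM gM neg] .
    have eW: "e \<subseteq> W" and gW: "g \<subseteq> W" using MW eM gM by auto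
    show "e1 \<inter> g1 = {}"
      using dis e1e g1g inj eW gW by (metis image_empty inj_on_image_Int)
    show "\<not> (\<exists>h\<in>bip_edges F1 S1 T1. h \<inter> e1 \<noteq> {} \<and> h \<inter> g1 \<noteq> {})"
    proof
      assume "\<exists>h\<in>bip_edges F1 S1 T1. h \<inter> e1 \<noteq> {} \<and> h \<inter> g1 \<noteq> {}"
      then obtain h where hB: "h \<in> bip_edges F1 S1 T1" and he: "h \<inter> e1 \<noteq> {}" and hg: "h \<inter> g1 \<noteq> {}" by blast
      obtain s1 t1 where s1t1: "s1 \<in> S1" "t1 \<in> T1" "h = {s1,t1}" "h \<in> F1"
        using hB unfolding bip_edges_def by blast
      obtain a where a: "a \<in> e" "f a \<in> h" using he e1e by blast
      obtain b where b: "b \<in> g" "f b \<in> h" using hg g1g by blast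
      have aW: "a \<in> W" and bW: "b \<in> W" using a b eW gW by auto
      have "a \<noteq> b" using a b dis by blast
      then have fab: "f a \<noteq> f b" using inj aW bW by (meson inj_on_contraD)
      have "s1 \<noteq> t1" using s1t1 ST by blast
      then have hab: "h = {f a, f b}" using a b fab s1t1(3) by auto
      then have ab: "{a,b} \<in> F0" using F'[OF aW bW] s1t1(4) by simp
      consider "s1 = f a" "t1 = f b" | "s1 = f b" "t1 = f a" using hab s1t1(3) fab by (auto simp: doubleton_eq_iff)
      then show False
      proof cases
        case 1
        then have "a \<in> S0" "b \<in> T0" using S[OF aW] T[OF bW] s1t1 by auto
        then have "{a,b} \<in> bip_edges F0 S0 T0" using ab unfolding bip_edges_def by blast
        from im_D(3)[OF im eM gM neg this] show False using a b by blast
      next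
        case 2
        then have "b \<in> S0" "a \<in> T0" using S[OF bW] T[OF aW] s1t1 by auto
        then have "{b,a} \<in> bip_edges F0 S0 T0" using ab unfolding bip_edges_def by (simp add: insert_commute) blast
        then have "{a,b} \<in> bip_edges F0 S0 T0" by (simp add: insert_commute)
        from im_D(3)[OF im eM gM neg this] show False using a b by blast
      qed
    qed
  qed
qed

definition good :: "(nat \<Rightarrow> nat list set set) \<Rightarrow> bool" where
  "good G \<longleftrightarrow> (\<forall>n e. e \<in> G n \<longrightarrow> (\<exists>u v. u \<in> L_verts n \<and> v \<in> L_verts n \<and> u \<noteq> v \<and> e = {u,v}))
     \<and> (\<forall>k i u v. i \<le> 2 \<longrightarrow> ({i#0#u, i#0#v} \<in> G (Suc k) \<longleftrightarrow> {u,v} \<in> G k))"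

lemma good_edge: "good G \<Longrightarrow> e \<in> G n \<Longrightarrow> \<exists>u v. u \<in> L_verts n \<and> v \<in> L_verts n \<and> u \<noteq> v \<and> e = {u,v}"
  unfolding good_def by blast

lemma good_copy: "good G \<Longrightarrow> i \<le> 2 \<Longrightarrow> {i#0#u, i#0#v} \<in> G (Suc k) \<longleftrightarrow> {u,v} \<in> G k"
  unfolding good_def by blast

lemma good_finite: "good G \<Longrightarrow> finite (G n)"
proof -
  assume g: "good G"
  have "G n \<subseteq> Pow (L_verts n)" using good_edge[OF g] by blast
  then show ?thesis by (meson finite_L finite_Pow_iff finite_subset)
qed

lemma good_tree: "good L_edges"
  unfolding good_def
  using LE_copy LE_edge adj_neq adj_def by metis

lemma good_sq: "good (\<lambda>n. graph_square (L_verts n) (L_edges n))"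
  unfolding good_def
  using SQ_copy sq_edge by metis

lemma copy_fwd:
  assumes g: "good G" and i: "i \<le> 2"
    and im: "induced_matching (bip_edges (G k) {w\<in>L_verts k. \<sigma> (i#0#w) \<le> p} {w\<in>L_verts k. \<not> \<sigma> (i#0#w) \<le> p}) M"
  shows "induced_matching (bip_edges (G (Suc k)) {v\<in>L_verts (Suc k). \<sigma> v \<le> p} {v\<in>L_verts (Suc k). \<not> \<sigma> v \<le> p}) ((`) (\<lambda>w. i#0#w) ` M)
     \<and> card ((`) (\<lambda>w. i#0#w) ` M) = card M"
proof (rule im_map_gen[OF _ _ _ _ _ _ _ im])
  show "inj_on (\<lambda>w. i#0#w) (L_verts k)" by (simp add: inj_on_def)
  show "{i#0#u, i#0#v} \<in> G (Suc k)" if "{u,v} \<in> G k" for u v using good_copy[OF g i] that by simp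
  show "{u,v} \<in> G k" if "{i#0#u, i#0#v} \<in> G (Suc k)" for u v using good_copy[OF g i] that by simp
  show "\<exists>x y. h = {x,y}" if "h \<in> G (Suc k)" for h using good_edge[OF g that] by blast
  show "i#0#w \<in> {v\<in>L_verts (Suc k). \<sigma> v \<le> p} \<longleftrightarrow> w \<in> {w\<in>L_verts k. \<sigma> (i#0#w) \<le> p}" if "w \<in> L_verts k" for w
    using that i by simp
  show "i#0#w \<in> {v\<in>L_verts (Suc k). \<not> \<sigma> v \<le> p} \<longleftrightarrow> w \<in> {w\<in>L_verts k. \<not> \<sigma> (i#0#w) \<le> p}" if "w \<in> L_verts k" for w
    using that i by simp
  show "{v\<in>L_verts (Suc k). \<sigma> v \<le> p} \<inter> {v\<in>L_verts (Suc k). \<not> \<sigma> v \<le> p} = {}" by blast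
  show "e \<subseteq> L_verts k" if "e \<in> M" for e
    using im_D(1)[OF im] that unfolding bip_edges_def by blast
qed

lemma copy_bwd:
  assumes g: "good G" and i: "i \<le> 2"
    and im: "induced_matching (bip_edges (G (Suc k)) {v\<in>L_verts (Suc k). \<sigma> v \<le> p} {v\<in>L_verts (Suc k). \<not> \<sigma> v \<le> p}) M"
    and MW: "\<And>e. e \<in> M \<Longrightarrow> e \<subseteq> (\<lambda>w. i#0#w) ` L_verts k"
  shows "\<exists>M0. induced_matching (bip_edges (G k) {w\<in>L_verts k. \<sigma> (i#0#w) \<le> p} {w\<in>L_verts k. \<not> \<sigma> (i#0#w) \<le> p}) M0
     \<and> card M0 = card M"
proof -
  let ?W = "(\<lambda>w. i#0#w) ` L_verts k"
  have "induced_matching (bip_edges (G k) {w\<in>L_verts k. \<sigma> (i#0#w) \<le> p} {w\<in>L_verts k. \<not> \<sigma> (i#0#w) \<le> p}) ((`) (drop 2) ` M)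
     \<and> card ((`) (drop 2) ` M) = card M"
  proof (rule im_map_gen[OF _ _ _ _ _ _ _ im MW])
    show "inj_on (drop 2) ?W" by (auto simp: inj_on_def)
    show "{drop 2 u, drop 2 v} \<in> G k" if "u \<in> ?W" "v \<in> ?W" "{u,v} \<in> G (Suc k)" for u v
      using that good_copy[OF g i] by auto
    show "{u,v} \<in> G (Suc k)" if "u \<in> ?W" "v \<in> ?W" "{drop 2 u, drop 2 v} \<in> G k" for u v
      using that good_copy[OF g i] by auto
    show "\<exists>x y. h = {x,y}" if "h \<in> G k" for h using good_edge[OF g that] by blast
    show "drop 2 w \<in> {w\<in>L_verts k. \<sigma> (i#0#w) \<le> p} \<longleftrightarrow> w \<in> {v\<in>L_verts (Suc k). \<sigma> v \<le> p}" if "w \<in> ?W" for w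
      using that i by auto
    show "drop 2 w \<in> {w\<in>L_verts k. \<not> \<sigma> (i#0#w) \<le> p} \<longleftrightarrow> w \<in> {v\<in>L_verts (Suc k). \<not> \<sigma> v \<le> p}" if "w \<in> ?W" for w
      using that i by auto
    show "{w\<in>L_verts k. \<sigma> (i#0#w) \<le> p} \<inter> {w\<in>L_verts k. \<not> \<sigma> (i#0#w) \<le> p} = {}" by blast
  qed
  then show ?thesis by blast
qed



lemma im_single: "e \<in> F \<Longrightarrow> induced_matching F {e}"
  using im_insert[OF im_empty] by blast

lemma median3: fixes P :: "nat \<Rightarrow> nat"
  shows "\<exists>a m b. a \<le> 2 \<and> m \<le> 2 \<and> b \<le> 2 \<and> a \<noteq> m \<and> b \<noteq> m \<and> a \<noteq> b \<and> P a \<le> P m \<and> P m \<le> P b"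
proof -
  consider "P 0 \<le> P 1" "P 1 \<le> P 2" | "P 0 \<le> P 2" "P 2 \<le> P 1" | "P 1 \<le> P 0" "P 0 \<le> P 2"
    | "P 1 \<le> P 2" "P 2 \<le> P 0" | "P 2 \<le> P 0" "P 0 \<le> P 1" | "P 2 \<le> P 1" "P 1 \<le> P 0" by linarith
  then show ?thesis
  proof cases
    case 1 then show ?thesis by (intro exI[of _ 0] exI[of _ 1] exI[of _ 2]) simp
  next
    case 2 then show ?thesis by (intro exI[of _ 0] exI[of _ 2] exI[of _ 1]) simp
  next
    case 3 then show ?thesis by (intro exI[of _ 1] exI[of _ 0] exI[of _ 2]) simp
  next
    case 4 then show ?thesis by (intro exI[of _ 1] exI[of _ 2] exI[of _ 0]) simp
  next
    case 5 then show ?thesis by (intro exI[of _ 2] exI[of _ 0] exI[of _ 1]) simp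
  next
    case 6 then show ?thesis by (intro exI[of _ 2] exI[of _ 1] exI[of _ 0]) simp
  qed
qed

definition extra :: "(nat \<Rightarrow> nat list set set) \<Rightarrow> bool" where
  "extra G \<longleftrightarrow> (\<forall>k (\<sigma>::nat list \<Rightarrow> nat) p a b m x y. a \<le> 2 \<and> b \<le> 2 \<and> m \<le> 2 \<and> a \<noteq> m \<and> b \<noteq> m \<and> a \<noteq> b
      \<and> x \<in> L_verts k \<and> y \<in> L_verts k \<and> \<sigma> (a#0#x) \<le> p \<and> \<not> \<sigma> (b#0#y) \<le> p \<longrightarrow>
     (\<exists>e \<in> bip_edges (G (Suc k)) {v\<in>L_verts (Suc k). \<sigma> v \<le> p} {v\<in>L_verts (Suc k). \<not> \<sigma> v \<le> p}.
        e \<inter> (\<lambda>w. m#0#w) ` L_verts k = {} \<and> (\<forall>g\<in>G (Suc k). g \<inter> e \<noteq> {} \<longrightarrow> g \<inter> (\<lambda>w. m#0#w) ` L_verts k = {})))"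

lemma extraD:
  fixes \<sigma> :: "nat list \<Rightarrow> nat"
  assumes "extra G" "a \<le> 2" "b \<le> 2" "m \<le> 2" "a \<noteq> m" "b \<noteq> m" "a \<noteq> b"
      "x \<in> L_verts k" "y \<in> L_verts k" "\<sigma> (a#0#x) \<le> p" "\<not> \<sigma> (b#0#y) \<le> p"
  shows "\<exists>e \<in> bip_edges (G (Suc k)) {v\<in>L_verts (Suc k). \<sigma> v \<le> p} {v\<in>L_verts (Suc k). \<not> \<sigma> v \<le> p}.
        e \<inter> (\<lambda>w. m#0#w) ` L_verts k = {} \<and> (\<forall>g\<in>G (Suc k). g \<inter> e \<noteq> {} \<longrightarrow> g \<inter> (\<lambda>w. m#0#w) ` L_verts k = {})"
  using assms(1) unfolding extra_def
  apply -
  apply (drule spec[where x=k], drule spec[where x=\<sigma>], drule spec[where x=p], drule spec[where x=a],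
     drule spec[where x=b], drule spec[where x=m], drule spec[where x=x], drule spec[where x=y])
  using assms(2-) by blast

lemma lower_gen:
  fixes \<sigma> :: "nat list \<Rightarrow> nat"
  assumes g: "good G" and base: "{[],[0]} \<in> G 1" and ex: "extra G"
  shows "1 \<le> k \<Longrightarrow> inj_on \<sigma> (L_verts k) \<Longrightarrow> \<exists>p M. induced_matching (bip_edges (G k) {v\<in>L_verts k. \<sigma> v \<le> p} {v\<in>L_verts k. \<not> \<sigma> v \<le> p}) M \<and> k \<le> card M"
proof (induction k arbitrary: \<sigma>)
  case 0 then show ?case by simp
next
  case (Suc k)
  show ?case
  proof (cases "k = 0")
    case True
    have mem: "[] \<in> L_verts 1" "[0] \<in> L_verts 1" by simp_all
    then have ne: "\<sigma> [] \<noteq> \<sigma> [0]" using Suc.prems(2) True by (metis One_nat_def inj_onD list.distinct(1))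
    let ?p = "min (\<sigma> []) (\<sigma> [0])"
    have "{[],[0]} \<in> bip_edges (G 1) {v\<in>L_verts 1. \<sigma> v \<le> ?p} {v\<in>L_verts 1. \<not> \<sigma> v \<le> ?p}"
    proof -
      have "\<sigma> [] \<le> ?p \<and> \<not> \<sigma> [0] \<le> ?p \<or> \<sigma> [0] \<le> ?p \<and> \<not> \<sigma> [] \<le> ?p" using ne by (auto simp: min_def)
      then show ?thesis
      proof
        assume h: "\<sigma> [] \<le> ?p \<and> \<not> \<sigma> [0] \<le> ?p"
        show ?thesis unfolding bip_edges_def
          using base mem h by (intro CollectI conjI exI[of _ "[]"] exI[of _ "[0]"]) auto
      next
        assume h: "\<sigma> [0] \<le> ?p \<and> \<not> \<sigma> [] \<le> ?p"
        show ?thesis unfolding bip_edges_def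
          using base mem h by (intro CollectI conjI exI[of _ "[0]"] exI[of _ "[]"]) (auto simp: insert_commute)
      qed
    qed
    then have "induced_matching (bip_edges (G 1) {v\<in>L_verts 1. \<sigma> v \<le> ?p} {v\<in>L_verts 1. \<not> \<sigma> v \<le> ?p}) {{[],[0]}}"
      by (rule im_single)
    then show ?thesis using True by (intro exI[of _ ?p] exI[of _ "{{[],[0]}}"]) simp
  next
    case False
    let ?Q = "\<lambda>i p M. induced_matching (bip_edges (G k) {w\<in>L_verts k. \<sigma> (i#0#w) \<le> p} {w\<in>L_verts k. \<not> \<sigma> (i#0#w) \<le> p}) M \<and> k \<le> card M"
    have "\<forall>i. \<exists>pM. i \<le> 2 \<longrightarrow> ?Q i (fst pM) (snd pM)"
    proof (intro allI)
      fix i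
      show "\<exists>pM. i \<le> 2 \<longrightarrow> ?Q i (fst pM) (snd pM)"
      proof (cases "i \<le> 2")
        case True
        have inj: "inj_on (\<lambda>w. \<sigma> (i#0#w)) (L_verts k)"
        proof (rule inj_onI)
          fix x y assume "x \<in> L_verts k" "y \<in> L_verts k" "\<sigma> (i#0#x) = \<sigma> (i#0#y)"
          then have "i#0#x = i#0#y" using True by (intro inj_onD[OF Suc.prems(2)]) simp_all
          then show "x = y" by simp
        qed
        have "\<exists>p M. ?Q i p M" using Suc.IH[OF _ inj] False by simp
        then obtain p M where "?Q i p M" by blast
        then show ?thesis by (intro exI[of _ "(p,M)"]) simp
      qed simp
    qed
    then obtain PM where PM': "\<forall>i. i \<le> 2 \<longrightarrow> ?Q i (fst (PM i)) (snd (PM i))" by (rule choice[THEN exE]) blast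
    then have PM: "\<And>i. i \<le> 2 \<Longrightarrow> ?Q i (fst (PM i)) (snd (PM i))" by blast
    define P where "P i = fst (PM i)" for i
    define MM where "MM i = snd (PM i)" for i
    have Q: "\<And>i. i \<le> 2 \<Longrightarrow> ?Q i (P i) (MM i)" using PM unfolding P_def MM_def by blast
    obtain a m b where amb: "a \<le> 2" "m \<le> 2" "b \<le> 2" "a \<noteq> m" "b \<noteq> m" "a \<noteq> b" "P a \<le> P m" "P m \<le> P b"
      using median3[of P] by blast
    let ?S = "{v\<in>L_verts (Suc k). \<sigma> v \<le> P m}"
    let ?T = "{v\<in>L_verts (Suc k). \<not> \<sigma> v \<le> P m}"
    let ?f = "\<lambda>w. m#0#w"
    let ?C = "?f ` L_verts k"
    define M' where "M' = (`) ?f ` MM m"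
    have M': "induced_matching (bip_edges (G (Suc k)) ?S ?T) M'" "card M' = card (MM m)"
      using copy_fwd[OF g amb(2), of k \<sigma> "P m" "MM m"] Q[OF amb(2)] unfolding M'_def by blast+
    have kpos: "1 \<le> k" using False by simp
    obtain ea where ea: "ea \<in> MM a" using Q[OF amb(1)] kpos by fastforce
    then obtain x xt where x: "x \<in> L_verts k" "\<sigma> (a#0#x) \<le> P a"
      using im_D(1) Q[OF amb(1)] unfolding bip_edges_def by blast
    obtain eb where eb: "eb \<in> MM b" using Q[OF amb(3)] kpos by fastforce
    then obtain y where y: "y \<in> L_verts k" "\<not> \<sigma> (b#0#y) \<le> P b"
      using im_D(1) Q[OF amb(3)] unfolding bip_edges_def by blast
    have hx: "\<sigma> (a#0#x) \<le> P m" using x amb by linarith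
    have hy: "\<not> \<sigma> (b#0#y) \<le> P m" using y amb by linarith
    from extraD[OF ex amb(1) amb(3) amb(2) amb(4-6) x(1) y(1) hx hy]
    obtain e where eB: "e \<in> bip_edges (G (Suc k)) ?S ?T"
      and eR: "e \<inter> ?C = {} \<and> (\<forall>g\<in>G (Suc k). g \<inter> e \<noteq> {} \<longrightarrow> g \<inter> ?C = {})"
      by (rule bexE)
    define C where "C = ?C"
    have eC: "e \<inter> C = {}" and eg: "\<forall>g\<in>G (Suc k). g \<inter> e \<noteq> {} \<longrightarrow> g \<inter> C = {}"
      using eR unfolding C_def by blast+
    have fC: "f \<subseteq> C" if fM: "f \<in> M'" for f
    proof -
      obtain f0 where "f0 \<in> MM m" "f = ?f ` f0" using fM unfolding M'_def by blast
      moreover have "f0 \<in> bip_edges (G k) {w\<in>L_verts k. \<sigma> (m#0#w) \<le> P m} {w\<in>L_verts k. \<not> \<sigma> (m#0#w) \<le> P m}"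
        using im_D(1)[OF conjunct1[OF Q[OF amb(2)]]] \<open>f0 \<in> MM m\<close> by (rule subsetD)
      then have "f0 \<subseteq> L_verts k" unfolding bip_edges_def by auto
      ultimately show ?thesis unfolding C_def by (simp add: image_mono)
    qed
    have ene: "e \<noteq> {}" using eB unfolding bip_edges_def by blast
    have eNC: "\<not> e \<subseteq> C"
    proof
      assume "e \<subseteq> C"
      then have "e \<inter> C = e" by (rule Int_absorb2)
      then show False using eC ene by simp
    qed
    have ins: "induced_matching (bip_edges (G (Suc k)) ?S ?T) (insert e M')"
    proof (rule im_insert[OF M'(1) eB])
      fix f assume fM: "f \<in> M'"
      have "e \<inter> f = {}" using fC[OF fM] eC by blast
      moreover have "e \<noteq> f"
      proof
        assume "e = f"
        with fC[OF fM] eNC show False by simp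
      qed
      moreover have "\<forall>g\<in>bip_edges (G (Suc k)) ?S ?T. g \<inter> e \<noteq> {} \<longrightarrow> g \<inter> f = {}"
      proof (intro ballI impI)
        fix g assume gB: "g \<in> bip_edges (G (Suc k)) ?S ?T" and ge: "g \<inter> e \<noteq> {}"
        have "g \<in> G (Suc k)" using gB unfolding bip_edges_def by blast
        then have "g \<inter> C = {}" using eg ge by blast
        then show "g \<inter> f = {}" using fC[OF fM] by blast
      qed
      ultimately show "e \<inter> f = {} \<and> e \<noteq> f \<and> (\<forall>g\<in>bip_edges (G (Suc k)) ?S ?T. g \<inter> e \<noteq> {} \<longrightarrow> g \<inter> f = {})"
        by blast
    qed
    have "e \<notin> M'"
    proof
      assume "e \<in> M'"
      from fC[OF this] eNC show False by simp
    qed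
    moreover have "finite M'"
      using im_finite[OF _ M'(1)] good_finite[OF g] unfolding bip_edges_def by auto
    ultimately have "card (insert e M') = card M' + 1" by simp
    then have "Suc k \<le> card (insert e M')" using M'(2) Q[OF amb(2)] by simp
    then show ?thesis using ins by blast
  qed
qed



lemma ivt_nat: fixes P :: "nat \<Rightarrow> bool"
  shows "j0 \<le> j1 \<Longrightarrow> P j0 \<noteq> P j1 \<Longrightarrow> \<exists>j. j0 \<le> j \<and> j < j1 \<and> P j \<noteq> P (Suc j)"
proof (induction j1)
  case 0 then show ?case by simp
next
  case (Suc j1)
  show ?case
  proof (cases "j0 = Suc j1")
    case True then show ?thesis using Suc by simp
  next
    case False
    then have le: "j0 \<le> j1" using Suc by simp
    show ?thesis
    proof (cases "P j1 = P (Suc j1)")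
      case True
      then obtain j where "j0 \<le> j \<and> j < j1 \<and> P j \<noteq> P (Suc j)" using Suc.IH[OF le] Suc.prems by auto
      then show ?thesis by (intro exI[of _ j]) simp
    next
      case False
      then show ?thesis using le by (intro exI[of _ j1]) simp
    qed
  qed
qed

lemma adj_chain: assumes "Y \<in> L_verts n" "j < length Y" shows "adj n (take j Y) (take (Suc j) Y)"
proof -
  have e: "take (Suc j) Y = take j Y @ [Y!j]" using assms(2) by (rule take_Suc_conv_app_nth)
  have m1: "take j Y \<in> L_verts n" by (rule take_L[OF assms(1)])
  have m2: "take (Suc j) Y \<in> L_verts n" by (rule take_L[OF assms(1)])
  have "\<exists>c. take (Suc j) Y = take j Y @ [c] \<or> take j Y = take (Suc j) Y @ [c]"
    by (rule exI[of _ "Y!j"], rule disjI1, rule e)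
  then show ?thesis unfolding adj_def using m1 m2 by (intro conjI)
qed

lemma chain_cross:
  fixes \<sigma> :: "nat list \<Rightarrow> nat"
  assumes Y: "Y \<in> L_verts n" and j0: "j0 \<le> length Y" and d: "(\<sigma> (take j0 Y) \<le> p) \<noteq> (\<sigma> Y \<le> p)"
  shows "\<exists>j. j0 \<le> j \<and> j < length Y \<and> {take j Y, take (Suc j) Y} \<in> bip_edges (L_edges n) {v\<in>L_verts n. \<sigma> v \<le> p} {v\<in>L_verts n. \<not> \<sigma> v \<le> p}"
proof -
  let ?P = "\<lambda>j. \<sigma> (take j Y) \<le> p"
  have d': "?P j0 \<noteq> ?P (length Y)" using d by simp
  obtain j where j: "j0 \<le> j" "j < length Y" "?P j \<noteq> ?P (Suc j)" using ivt_nat[OF j0 d'] by blast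
  have e: "{take j Y, take (Suc j) Y} \<in> L_edges n" using adj_chain[OF Y j(2)] LE_mem by blast
  have m: "take j Y \<in> L_verts n" "take (Suc j) Y \<in> L_verts n" using take_L[OF Y] by auto
  have "{take j Y, take (Suc j) Y} \<in> bip_edges (L_edges n) {v\<in>L_verts n. \<sigma> v \<le> p} {v\<in>L_verts n. \<not> \<sigma> v \<le> p}"
  proof (cases "?P j")
    case True
    then show ?thesis using j(3) e m unfolding bip_edges_def by blast
  next
    case False
    then have "{take (Suc j) Y, take j Y} \<in> bip_edges (L_edges n) {v\<in>L_verts n. \<sigma> v \<le> p} {v\<in>L_verts n. \<not> \<sigma> v \<le> p}"
      using j(3) e m unfolding bip_edges_def by (simp add: insert_commute) blast
    then show ?thesis by (simp add: insert_commute)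
  qed
  then show ?thesis using j by blast
qed

lemma take_cons_hd: "take i (b#r) = [] \<or> (take i (b#r) \<noteq> [] \<and> hd (take i (b#r)) = b)"
  by (cases i) auto

lemma take_cons_hd1: "1 \<le> i \<Longrightarrow> take i (b#r) \<noteq> [] \<and> hd (take i (b#r)) = b"
  by (cases i) auto

lemma adj_hd: "adj n v u \<Longrightarrow> v \<noteq> [] \<Longrightarrow> u = [] \<or> (u \<noteq> [] \<and> hd u = hd v)"
  unfolding adj_def by (cases u; cases v) auto

lemma adj_copy_hd: "adj n (m#0#w) u \<Longrightarrow> u \<noteq> [] \<and> hd u = m"
  unfolding adj_def by (cases u) auto

lemma tree_sep:
  assumes u: "u = [] \<or> hd u \<noteq> m" and g: "g \<in> L_edges n" and ug: "u \<in> g"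
  shows "g \<inter> (\<lambda>w. m#0#w) ` L_verts k = {}"
proof (rule ccontr)
  assume "g \<inter> (\<lambda>w. m#0#w) ` L_verts k \<noteq> {}"
  then obtain w where vg: "m#0#w \<in> g" by blast
  obtain u1 v1 where g1: "g = {u1,v1}" "adj n u1 v1" using LE_edge[OF g] by blast
  have "u \<noteq> m#0#w" using u by auto
  then have "{u1,v1} = {m#0#w, u}" using g1 vg ug by auto
  then have "adj n (m#0#w) u" using g1(2) adj_sym unfolding doubleton_eq_iff by blast
  then show False using adj_copy_hd u by blast
qed

lemma sq_sep:
  assumes u: "u \<noteq> [] \<and> hd u \<noteq> m" and g: "g \<in> graph_square (L_verts n) (L_edges n)" and ug: "u \<in> g"
  shows "g \<inter> (\<lambda>w. m#0#w) ` L_verts k = {}"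
proof (rule ccontr)
  assume "g \<inter> (\<lambda>w. m#0#w) ` L_verts k \<noteq> {}"
  then obtain w where vg: "m#0#w \<in> g" by blast
  obtain u1 v1 where g1: "g = {u1,v1}" "u1 \<noteq> v1" using sq_edge[OF g] by blast
  have "u \<noteq> m#0#w" using u by auto
  then have "g = {m#0#w, u}" using g1 vg ug by auto
  then have "adj n (m#0#w) u \<or> (\<exists>z. adj n (m#0#w) z \<and> adj n z u)" using g sq_mem by blast
  then show False
  proof
    assume "adj n (m#0#w) u" then show False using adj_copy_hd u by blast
  next
    assume "\<exists>z. adj n (m#0#w) z \<and> adj n z u"
    then obtain z where "adj n (m#0#w) z" "adj n z u" by blast
    then have "z \<noteq> []" "hd z = m" using adj_copy_hd by blast+
    then show False using adj_hd[OF \<open>adj n z u\<close>] u by auto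
  qed
qed

lemma extra_of:
  assumes eB: "e \<in> bip_edges (G (Suc k)) S T"
    and eQ: "\<forall>u\<in>e. Q u"
    and Qsep: "\<And>u g. Q u \<Longrightarrow> g \<in> G (Suc k) \<Longrightarrow> u \<in> g \<Longrightarrow> g \<inter> (\<lambda>w. m#0#w) ` L_verts k = {}"
    and QC: "\<And>w. \<not> Q (m#0#w)"
  shows "\<exists>e \<in> bip_edges (G (Suc k)) S T.
        e \<inter> (\<lambda>w. m#0#w) ` L_verts k = {} \<and> (\<forall>g\<in>G (Suc k). g \<inter> e \<noteq> {} \<longrightarrow> g \<inter> (\<lambda>w. m#0#w) ` L_verts k = {})"
proof (rule bexI[OF _ eB], intro conjI ballI impI)
  show "e \<inter> (\<lambda>w. m#0#w) ` L_verts k = {}" using eQ QC by blast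
next
  fix g assume "g \<in> G (Suc k)" "g \<inter> e \<noteq> {}"
  then obtain u where "u \<in> g" "u \<in> e" by blast
  then show "g \<inter> (\<lambda>w. m#0#w) ` L_verts k = {}" using Qsep eQ \<open>g \<in> G (Suc k)\<close> by blast
qed



lemma bip_mono: "F \<subseteq> F' \<Longrightarrow> bip_edges F S T \<subseteq> bip_edges F' S T"
  unfolding bip_edges_def by blast

lemma LE_sub_SQ: "L_edges n \<subseteq> graph_square (L_verts n) (L_edges n)"
proof
  fix e assume "e \<in> L_edges n"
  then obtain u v where "e = {u,v}" "adj n u v" using LE_edge by blast
  then show "e \<in> graph_square (L_verts n) (L_edges n)" using sq_mem adj_neq by blast
qed

lemma extra_tree: "extra L_edges"
  unfolding extra_def
proof (intro allI impI, elim conjE)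
  fix k and \<sigma> :: "nat list \<Rightarrow> nat" and p a b m x y
  assume a: "a \<le> 2" and b: "b \<le> 2" and m: "m \<le> 2" and am: "a \<noteq> m" and bm: "b \<noteq> m" and ab: "a \<noteq> b"
    and x: "x \<in> L_verts k" and y: "y \<in> L_verts k" and hx: "\<sigma> (a#0#x) \<le> p" and hy: "\<not> \<sigma> (b#0#y) \<le> p"
  let ?S = "{v\<in>L_verts (Suc k). \<sigma> v \<le> p}" and ?T = "{v\<in>L_verts (Suc k). \<not> \<sigma> v \<le> p}"
  let ?Q = "\<lambda>u::nat list. u = [] \<or> hd u \<noteq> m"
  have X: "a#0#x \<in> L_verts (Suc k)" and Y: "b#0#y \<in> L_verts (Suc k)" using a b x y by simp_all
  have Qsep: "\<And>u g. ?Q u \<Longrightarrow> g \<in> L_edges (Suc k) \<Longrightarrow> u \<in> g \<Longrightarrow> g \<inter> (\<lambda>w. m#0#w) ` L_verts k = {}"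
    by (rule tree_sep)
  have QC: "\<And>w. \<not> ?Q (m#0#w)" by simp
  show "\<exists>e\<in>bip_edges (L_edges (Suc k)) ?S ?T. e \<inter> (\<lambda>w. m#0#w) ` L_verts k = {} \<and>
          (\<forall>g\<in>L_edges (Suc k). g \<inter> e \<noteq> {} \<longrightarrow> g \<inter> (\<lambda>w. m#0#w) ` L_verts k = {})"
  proof (cases "\<sigma> [] \<le> p")
    case True
    have "(\<sigma> (take 0 (b#0#y)) \<le> p) \<noteq> (\<sigma> (b#0#y) \<le> p)" using True hy by simp
    then obtain j where j: "{take j (b#0#y), take (Suc j) (b#0#y)} \<in> bip_edges (L_edges (Suc k)) ?S ?T"
      using chain_cross[OF Y, of 0] by blast
    have "\<forall>u\<in>{take j (b#0#y), take (Suc j) (b#0#y)}. ?Q u"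
      using take_cons_hd[of j b "0#y"] take_cons_hd[of "Suc j" b "0#y"] bm by auto
    from extra_of[where G=L_edges and k=k and m=m and Q="\<lambda>u. u = [] \<or> hd u \<noteq> m", OF j this Qsep QC] show ?thesis .
  next
    case False
    have "(\<sigma> (take 0 (a#0#x)) \<le> p) \<noteq> (\<sigma> (a#0#x) \<le> p)" using False hx by simp
    then obtain j where j: "{take j (a#0#x), take (Suc j) (a#0#x)} \<in> bip_edges (L_edges (Suc k)) ?S ?T"
      using chain_cross[OF X, of 0] by blast
    have "\<forall>u\<in>{take j (a#0#x), take (Suc j) (a#0#x)}. ?Q u"
      using take_cons_hd[of j a "0#x"] take_cons_hd[of "Suc j" a "0#x"] am by auto
    from extra_of[where G=L_edges and k=k and m=m and Q="\<lambda>u. u = [] \<or> hd u \<noteq> m", OF j this Qsep QC] show ?thesis .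
  qed
qed

lemma extra_sq: "extra (\<lambda>n. graph_square (L_verts n) (L_edges n))"
  unfolding extra_def
proof (intro allI impI, elim conjE)
  fix k and \<sigma> :: "nat list \<Rightarrow> nat" and p a b m x y
  assume a: "a \<le> 2" and b: "b \<le> 2" and m: "m \<le> 2" and am: "a \<noteq> m" and bm: "b \<noteq> m" and ab: "a \<noteq> b"
    and x: "x \<in> L_verts k" and y: "y \<in> L_verts k" and hx: "\<sigma> (a#0#x) \<le> p" and hy: "\<not> \<sigma> (b#0#y) \<le> p"
  let ?S = "{v\<in>L_verts (Suc k). \<sigma> v \<le> p}" and ?T = "{v\<in>L_verts (Suc k). \<not> \<sigma> v \<le> p}"
  let ?G = "graph_square (L_verts (Suc k)) (L_edges (Suc k))"
  let ?Q = "\<lambda>u::nat list. u \<noteq> [] \<and> hd u \<noteq> m"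
  have X: "a#0#x \<in> L_verts (Suc k)" and Y: "b#0#y \<in> L_verts (Suc k)" using a b x y by simp_all
  have Qsep: "\<And>u g. ?Q u \<Longrightarrow> g \<in> ?G \<Longrightarrow> u \<in> g \<Longrightarrow> g \<inter> (\<lambda>w. m#0#w) ` L_verts k = {}"
    by (rule sq_sep)
  have QC: "\<And>w. \<not> ?Q (m#0#w)" by simp
  have sub: "bip_edges (L_edges (Suc k)) ?S ?T \<subseteq> bip_edges ?G ?S ?T" by (rule bip_mono[OF LE_sub_SQ])
  show "\<exists>e\<in>bip_edges ?G ?S ?T. e \<inter> (\<lambda>w. m#0#w) ` L_verts k = {} \<and>
          (\<forall>g\<in>?G. g \<inter> e \<noteq> {} \<longrightarrow> g \<inter> (\<lambda>w. m#0#w) ` L_verts k = {})"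
  proof (cases "\<sigma> [a] \<le> p")
    case True
    show ?thesis
    proof (cases "\<sigma> [b] \<le> p")
      case True
      have "(\<sigma> (take 1 (b#0#y)) \<le> p) \<noteq> (\<sigma> (b#0#y) \<le> p)" using True hy by simp
      then obtain j where j: "1 \<le> j" "{take j (b#0#y), take (Suc j) (b#0#y)} \<in> bip_edges (L_edges (Suc k)) ?S ?T"
        using chain_cross[OF Y, of 1] by auto
      have "\<forall>u\<in>{take j (b#0#y), take (Suc j) (b#0#y)}. ?Q u"
        using take_cons_hd1[of j b "0#y"] take_cons_hd1[of "Suc j" b "0#y"] bm j(1) by auto
      from extra_of[where G="\<lambda>n. graph_square (L_verts n) (L_edges n)" and k=k and m=m and Q="\<lambda>u. u \<noteq> [] \<and> hd u \<noteq> m", OF subsetD[OF sub j(2)] this Qsep QC] show ?thesis .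
    next
      case False
      have "adj (Suc k) [a] []" "adj (Suc k) [] [b]" using a b by (simp_all add: adj_single adj_nil)
      then have "{[a],[b]} \<in> ?G" using ab sq_mem by blast
      then have e: "{[a],[b]} \<in> bip_edges ?G ?S ?T"
        using \<open>\<sigma> [a] \<le> p\<close> False a b unfolding bip_edges_def
        by (intro CollectI conjI exI[of _ "[a]"] exI[of _ "[b]"]) simp_all
      have "\<forall>u\<in>{[a],[b]}. ?Q u" using am bm by auto
      from extra_of[where G="\<lambda>n. graph_square (L_verts n) (L_edges n)" and k=k and m=m and Q="\<lambda>u. u \<noteq> [] \<and> hd u \<noteq> m", OF e this Qsep QC] show ?thesis .
    qed
  next
    case False
    have "(\<sigma> (take 1 (a#0#x)) \<le> p) \<noteq> (\<sigma> (a#0#x) \<le> p)" using False hx by simp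
    then obtain j where j: "1 \<le> j" "{take j (a#0#x), take (Suc j) (a#0#x)} \<in> bip_edges (L_edges (Suc k)) ?S ?T"
      using chain_cross[OF X, of 1] by auto
    have "\<forall>u\<in>{take j (a#0#x), take (Suc j) (a#0#x)}. ?Q u"
      using take_cons_hd1[of j a "0#x"] take_cons_hd1[of "Suc j" a "0#x"] am j(1) by auto
    from extra_of[where G="\<lambda>n. graph_square (L_verts n) (L_edges n)" and k=k and m=m and Q="\<lambda>u. u \<noteq> [] \<and> hd u \<noteq> m", OF subsetD[OF sub j(2)] this Qsep QC] show ?thesis .
  qed
qed



definition off :: "nat \<Rightarrow> nat \<Rightarrow> nat" where
  "off i n = (if i = 0 then 1 else if i = 1 then n + 2 else 2 * n + 4)"

fun lay :: "nat \<Rightarrow> nat list \<Rightarrow> nat" where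
  "lay 0 v = 1"
| "lay (Suc k) v = (if v = [] then 1
     else if v = [0] then card (L_verts k) + 2
     else if v = [1] then 2 * card (L_verts k) + 3
     else if v = [2] then 2 * card (L_verts k) + 4
     else off (hd v) (card (L_verts k)) + lay k (drop 2 v))"

declare lay.simps(2)[simp del]

lemma lay_nil[simp]: "lay (Suc k) [] = 1" by (simp add: lay.simps)
lemma lay_0[simp]: "lay (Suc k) [0] = card (L_verts k) + 2" by (simp add: lay.simps)
lemma lay_1[simp]: "lay (Suc k) [1] = 2 * card (L_verts k) + 3" by (simp add: lay.simps)
lemma lay_1'[simp]: "lay (Suc k) [Suc 0] = 2 * card (L_verts k) + 3" by (simp add: lay.simps)
lemma lay_2[simp]: "lay (Suc k) [2] = 2 * card (L_verts k) + 4" by (simp add: lay.simps)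
lemma lay_copy[simp]: "lay (Suc k) (i#0#w) = off i (card (L_verts k)) + lay k w" by (simp add: lay.simps)

lemma card_L_pos: "1 \<le> card (L_verts k)"
  using nil_in_L[of k] finite_L[of k] by (metis One_nat_def Suc_leI card_gt_0_iff empty_iff)

lemma lay_range: "w \<in> L_verts k \<Longrightarrow> 1 \<le> lay k w \<and> lay k w \<le> card (L_verts k)"
proof (induction k arbitrary: w)
  case 0 then show ?case by simp
next
  case (Suc k)
  let ?n = "card (L_verts k)"
  have n: "1 \<le> ?n" by (rule card_L_pos)
  from Suc.prems consider "w = []" | i where "i \<le> 2" "w = [i]" | i u where "i\<le>2" "u \<in> L_verts k" "w = [i,0]@u"
    unfolding L_Suc_iff by blast
  then show ?case
  proof cases
    case 1 then show ?thesis by (simp add: card_L_Suc)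
  next
    case 2 then show ?thesis using n by (auto simp: card_L_Suc le2_iff)
  next
    case 3 then show ?thesis using Suc.IH[of u] by (auto simp: card_L_Suc le2_iff off_def)
  qed
qed

lemma lay_inj: "inj_on (lay k) (L_verts k)"
proof (induction k)
  case 0 then show ?case by simp
next
  case (Suc k)
  let ?n = "card (L_verts k)"
  have n: "1 \<le> ?n" by (rule card_L_pos)
  show ?case
  proof (rule inj_onI)
    fix x y assume x: "x \<in> L_verts (Suc k)" and y: "y \<in> L_verts (Suc k)" and e: "lay (Suc k) x = lay (Suc k) y"
    from x consider "x = []" | i where "i \<le> 2" "x = [i]" | i u where "i\<le>2" "u \<in> L_verts k" "x = [i,0]@u"
      unfolding L_Suc_iff by blast
    note cx = this
    from y consider "y = []" | j where "j \<le> 2" "y = [j]" | j v where "j\<le>2" "v \<in> L_verts k" "y = [j,0]@v"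
      unfolding L_Suc_iff by blast
    note cy = this
    show "x = y"
    proof (cases rule: cx)
      case 1
      then show ?thesis
      proof (cases rule: cy)
        case 3 then show ?thesis using e 1 lay_range[of v k] by (auto simp: le2_iff off_def)
      qed (use e 1 n in \<open>auto simp: le2_iff\<close>)
    next
      case (2 i)
      then show ?thesis
      proof (cases rule: cy)
        case 3 then show ?thesis using e 2 lay_range[of v k] by (auto simp: le2_iff off_def)
      qed (use e 2 n in \<open>auto simp: le2_iff\<close>)
    next
      case (3 i u)
      then show ?thesis
      proof (cases rule: cy)
        case (3 j v)
        have ru: "1 \<le> lay k u \<and> lay k u \<le> ?n" using lay_range \<open>u \<in> L_verts k\<close> by blast
        have rv: "1 \<le> lay k v \<and> lay k v \<le> ?n" using lay_range \<open>v \<in> L_verts k\<close> by blast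
        have "i = j" using e 3 \<open>x = [i,0]@u\<close> \<open>i \<le> 2\<close> ru rv by (auto simp: le2_iff off_def)
        then have "lay k u = lay k v" using e 3 \<open>x = [i,0]@u\<close> by simp
        then have "u = v" using Suc.IH \<open>u \<in> L_verts k\<close> \<open>v \<in> L_verts k\<close> by (meson inj_onD)
        then show ?thesis using \<open>i = j\<close> 3 \<open>x = [i,0]@u\<close> by simp
      qed (use e 3 lay_range[of u k] in \<open>auto simp: le2_iff off_def\<close>)
    qed
  qed
qed

lemma lay_bij: "bij_betw (lay k) (L_verts k) {1..card (L_verts k)}"
proof -
  have sub: "lay k ` L_verts k \<subseteq> {1..card (L_verts k)}" using lay_range by auto
  have "card (lay k ` L_verts k) = card {1..card (L_verts k)}"
    using card_image[OF lay_inj] by simp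
  then have "lay k ` L_verts k = {1..card (L_verts k)}"
    using sub by (intro card_subset_eq) auto
  then show ?thesis using lay_inj unfolding bij_betw_def by blast
qed



definition Top :: "nat list set" where "Top = {[],[0],[1],[2]}"

definition classes :: "(nat \<Rightarrow> nat list set set) \<Rightarrow> bool" where
  "classes G \<longleftrightarrow> (\<forall>k e. e \<in> G (Suc k) \<longrightarrow> e \<inter> Top \<noteq> {} \<or> (\<exists>i\<le>2. e \<subseteq> (\<lambda>w. i#0#w) ` L_verts k))"

definition topb :: "(nat \<Rightarrow> nat list set set) \<Rightarrow> bool" where
  "topb G \<longleftrightarrow> (\<forall>k p M. induced_matching (bip_edges (G (Suc k)) {v\<in>L_verts (Suc k). lay (Suc k) v \<le> p} {v\<in>L_verts (Suc k). \<not> lay (Suc k) v \<le> p}) M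
      \<longrightarrow> card {e\<in>M. e \<inter> Top \<noteq> {}} \<le> 1)"

lemma upper_gen:
  assumes g: "good G" and cl: "classes G" and tb: "topb G"
  shows "mim (bip_edges (G k) {v\<in>L_verts k. lay k v \<le> p} {v\<in>L_verts k. \<not> lay k v \<le> p}) \<le> k"
proof (induction k arbitrary: p)
  case 0
  have "bip_edges (G 0) {v\<in>L_verts 0. lay 0 v \<le> p} {v\<in>L_verts 0. \<not> lay 0 v \<le> p} = {}"
    unfolding bip_edges_def by auto
  then show ?case unfolding mim_def induced_matching_def by simp
next
  case (Suc k)
  let ?n = "card (L_verts k)"
  let ?S = "{v\<in>L_verts (Suc k). lay (Suc k) v \<le> p}" and ?T = "{v\<in>L_verts (Suc k). \<not> lay (Suc k) v \<le> p}"
  let ?F = "bip_edges (G (Suc k)) ?S ?T"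
  have finF: "finite ?F" using good_finite[OF g] unfolding bip_edges_def by auto
  show ?case
  proof (rule mim_le[OF finF])
    fix M assume im: "induced_matching ?F M"
    define c where "c = (if p \<le> ?n + 1 then 0 else if p \<le> 2 * ?n + 3 then 1 else (2::nat))"
    have c2: "c \<le> 2" unfolding c_def by auto
    let ?C = "(\<lambda>w. c#0#w) ` L_verts k"
    define A where "A = {e\<in>M. e \<inter> Top \<noteq> {}}"
    define B where "B = {e\<in>M. e \<subseteq> ?C}"
    have MAB: "M \<subseteq> A \<union> B"
    proof
      fix e assume eM: "e \<in> M"
      show "e \<in> A \<union> B"
      proof (cases "e \<inter> Top = {}")
        case False then show ?thesis using eM unfolding A_def by blast
      next
        case True
        have eF: "e \<in> ?F" using im_D(1)[OF im] eM by blast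
        then have eG: "e \<in> G (Suc k)" unfolding bip_edges_def by blast
        then obtain i where i: "i \<le> 2" "e \<subseteq> (\<lambda>w. i#0#w) ` L_verts k" using cl True unfolding classes_def by blast
        obtain s t where st: "s \<in> ?S" "t \<in> ?T" "e = {s,t}" using eF unfolding bip_edges_def by blast
        obtain s0 where s0: "s0 \<in> L_verts k" "s = i#0#s0" using i st by auto
        obtain t0 where t0: "t0 \<in> L_verts k" "t = i#0#t0" using i st by auto
        have rs: "1 \<le> lay k s0 \<and> lay k s0 \<le> ?n" using lay_range[OF s0(1)] .
        have rt: "1 \<le> lay k t0 \<and> lay k t0 \<le> ?n" using lay_range[OF t0(1)] .
        have ls: "off i ?n + lay k s0 \<le> p" using st s0 by simp
        have lt: "\<not> off i ?n + lay k t0 \<le> p" using st t0 by simp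
        have "i = c" using i(1) ls lt rs rt unfolding c_def off_def by (auto simp: le2_iff)
        then show ?thesis using eM i unfolding B_def by blast
      qed
    qed
    have finM: "finite M" using im_finite[OF finF im] .
    have cA: "card A \<le> 1" using tb unfolding topb_def A_def
      apply -
      apply (drule spec[where x=k], drule spec[where x=p], drule spec[where x=M])
      apply (erule mp)
      apply (rule im)
      done
    have imB: "induced_matching ?F B" by (rule im_sub[OF im]) (auto simp: B_def)
    have MW: "\<And>e. e \<in> B \<Longrightarrow> e \<subseteq> ?C" unfolding B_def by blast
    from copy_bwd[OF g c2 imB MW]
    obtain M0 where M0: "induced_matching (bip_edges (G k) {w\<in>L_verts k. lay (Suc k) (c#0#w) \<le> p} {w\<in>L_verts k. \<not> lay (Suc k) (c#0#w) \<le> p}) M0"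
      "card M0 = card B" by blast
    have pw: "(lay (Suc k) (c#0#w) \<le> p) = (lay k w \<le> p - off c ?n)" if "w \<in> L_verts k" for w
      using lay_range[OF that] by simp arith
    have eqS: "{w\<in>L_verts k. lay (Suc k) (c#0#w) \<le> p} = {w\<in>L_verts k. lay k w \<le> p - off c ?n}"
      using pw by blast
    have eqT: "{w\<in>L_verts k. \<not> lay (Suc k) (c#0#w) \<le> p} = {w\<in>L_verts k. \<not> lay k w \<le> p - off c ?n}"
      using pw by blast
    have finF0: "finite (bip_edges (G k) {w\<in>L_verts k. lay k w \<le> p - off c ?n} {w\<in>L_verts k. \<not> lay k w \<le> p - off c ?n})"
      using good_finite[OF g] unfolding bip_edges_def by auto
    have "card M0 \<le> k"
      using mim_ge[OF finF0] M0(1) Suc.IH[of "p - off c ?n"] unfolding eqS eqT by fastforce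
    then have cB: "card B \<le> k" using M0(2) by simp
    have "card M \<le> card (A \<union> B)" using MAB finM by (intro card_mono) (auto simp: A_def B_def)
    also have "\<dots> \<le> card A + card B" by (rule card_Un_le)
    finally show "card M \<le> Suc k" using cA cB by simp
  qed
qed



lemma prefix_eq: "prefix_set V \<sigma> i = {v\<in>V. \<sigma> v \<le> i}" unfolding prefix_set_def by simp
lemma prefix_compl': "V - {v\<in>V. \<sigma> v \<le> (i::nat)} = {v\<in>V. \<not> \<sigma> v \<le> i}" by auto
lemma prefix_compl: "V - prefix_set V \<sigma> i = {v\<in>V. \<not> \<sigma> v \<le> i}" unfolding prefix_set_def by auto

lemma mim_width_le_card:
  assumes g: "good G"
  shows "mim_width (L_verts k) (G k) \<sigma> \<le> card (G k)"
  unfolding mim_width_def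
proof (rule Max.boundedI)
  show "finite (insert 0 ((\<lambda>i. mim (bip_edges (G k) (prefix_set (L_verts k) \<sigma> i) (L_verts k - prefix_set (L_verts k) \<sigma> i))) ` {1..<card (L_verts k)}))"
    by simp
  show "insert 0 ((\<lambda>i. mim (bip_edges (G k) (prefix_set (L_verts k) \<sigma> i) (L_verts k - prefix_set (L_verts k) \<sigma> i))) ` {1..<card (L_verts k)}) \<noteq> {}"
    by simp
  fix a assume "a \<in> insert 0 ((\<lambda>i. mim (bip_edges (G k) (prefix_set (L_verts k) \<sigma> i) (L_verts k - prefix_set (L_verts k) \<sigma> i))) ` {1..<card (L_verts k)})"
  then consider "a = 0" | i where "a = mim (bip_edges (G k) (prefix_set (L_verts k) \<sigma> i) (L_verts k - prefix_set (L_verts k) \<sigma> i))" by blast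
  then show "a \<le> card (G k)"
  proof cases
    case 1 then show ?thesis by simp
  next
    case (2 i)
    let ?B = "bip_edges (G k) (prefix_set (L_verts k) \<sigma> i) (L_verts k - prefix_set (L_verts k) \<sigma> i)"
    have sub: "?B \<subseteq> G k" unfolding bip_edges_def by blast
    have fin: "finite (G k)" using good_finite[OF g] .
    have "mim ?B \<le> card ?B" using mim_le_card finite_subset[OF sub fin] by blast
    also have "\<dots> \<le> card (G k)" using card_mono[OF fin sub] .
    finally show ?thesis using 2 by simp
  qed
qed

lemma lmw_gen:
  assumes g: "good G" and base: "{[],[0]} \<in> G 1" and ex: "extra G" and cl: "classes G" and tb: "topb G"
  shows "lmw (L_verts k) (G k) = k"
proof -
  let ?V = "L_verts k"
  let ?n = "card ?V"
  let ?Vals = "{mim_width ?V (G k) \<sigma> | \<sigma>. linear_layout ?V \<sigma>}"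
  have fin: "finite ?Vals"
  proof (rule finite_subset)
    show "?Vals \<subseteq> {0..card (G k)}" using mim_width_le_card[OF g] by auto
  qed simp
  have lay_in: "mim_width ?V (G k) (lay k) \<in> ?Vals"
    using lay_bij unfolding linear_layout_def by blast
  have lay_le: "mim_width ?V (G k) (lay k) \<le> k"
    unfolding mim_width_def
  proof (rule Max.boundedI)
    fix a assume "a \<in> insert 0 ((\<lambda>i. mim (bip_edges (G k) (prefix_set ?V (lay k) i) (?V - prefix_set ?V (lay k) i))) ` {1..<?n})"
    then consider "a = 0" | i where "a = mim (bip_edges (G k) (prefix_set ?V (lay k) i) (?V - prefix_set ?V (lay k) i))" by blast
    then show "a \<le> k"
    proof cases
      case 1 then show ?thesis by simp
    next
      case (2 i)
      then show ?thesis using upper_gen[OF g cl tb, of k i] by (simp add: prefix_eq prefix_compl')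
    qed
  qed auto
  have all_ge: "k \<le> w" if wV: "w \<in> ?Vals" for w
  proof (cases "k = 0")
    case True then show ?thesis by simp
  next
    case False
    obtain \<sigma> where w: "w = mim_width ?V (G k) \<sigma>" and ll: "linear_layout ?V \<sigma>" using wV by blast
    have bij: "bij_betw \<sigma> ?V {1..?n}" using ll unfolding linear_layout_def .
    then have inj: "inj_on \<sigma> ?V" by (rule bij_betw_imp_inj_on)
    have rng: "\<And>v. v \<in> ?V \<Longrightarrow> 1 \<le> \<sigma> v \<and> \<sigma> v \<le> ?n" using bij unfolding bij_betw_def by auto
    obtain p M where im: "induced_matching (bip_edges (G k) {v\<in>?V. \<sigma> v \<le> p} {v\<in>?V. \<not> \<sigma> v \<le> p}) M" and kM: "k \<le> card M"
      using lower_gen[OF g base ex, of k \<sigma>] False inj by auto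
    have "M \<noteq> {}" using kM False by auto
    then obtain e where "e \<in> M" by blast
    then have "e \<in> bip_edges (G k) {v\<in>?V. \<sigma> v \<le> p} {v\<in>?V. \<not> \<sigma> v \<le> p}" using im_D(1)[OF im] by blast
    then obtain s t where "s \<in> ?V" "\<sigma> s \<le> p" "t \<in> ?V" "\<not> \<sigma> t \<le> p" unfolding bip_edges_def by blast
    then have p: "p \<in> {1..<?n}" using rng[of s] rng[of t] by auto
    let ?B = "bip_edges (G k) {v\<in>?V. \<sigma> v \<le> p} {v\<in>?V. \<not> \<sigma> v \<le> p}"
    have finB: "finite ?B" using good_finite[OF g] unfolding bip_edges_def by auto
    have "k \<le> mim ?B" using mim_ge[OF finB im] kM by simp
    also have "mim ?B \<le> w"
      unfolding w mim_width_def prefix_eq[symmetric] prefix_compl[symmetric]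
      by (rule Max_ge) (use p in auto)
    finally show ?thesis .
  qed
  have "mim_width ?V (G k) (lay k) = k" using lay_le all_ge[OF lay_in] by simp
  then have "Min ?Vals = k" using lay_in all_ge fin by (intro Min_eqI) auto
  then show ?thesis unfolding lmw_def .
qed



lemma lay_nil_any[simp]: "lay k [] = 1" by (cases k) simp_all

lemma lay_pair[simp]: "lay (Suc k) [i,0] = off i (card (L_verts k)) + 1"
  using lay_copy[of k i "[]"] by simp

definition Phit :: "nat \<Rightarrow> nat \<Rightarrow> nat list \<Rightarrow> nat list \<Rightarrow> bool" where
  "Phit n p s t \<longleftrightarrow> (p \<le> n+1 \<longrightarrow> s = [] \<or> t = [0]) \<and> (n+2 \<le> p \<and> p \<le> 2*n+2 \<longrightarrow> s = [] \<or> t = [1])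
     \<and> (p = 2*n+3 \<longrightarrow> t = [2]) \<and> (2*n+4 \<le> p \<longrightarrow> s = [2])"

lemma adj_nil': "adj (Suc k) v [] \<longleftrightarrow> (\<exists>i\<le>2. v = [i])"
  using adj_nil adj_sym by metis

lemma adj_single': "i \<le> 2 \<Longrightarrow> adj (Suc k) v [i] \<longleftrightarrow> v = [] \<or> v = [i,0]"
  using adj_single adj_sym by metis

lemma tree_form:
  assumes e: "{s,t} \<in> L_edges (Suc k)" and ls: "lay (Suc k) s \<le> p" and lt: "\<not> lay (Suc k) t \<le> p"
    and top: "s \<in> Top \<or> t \<in> Top"
  shows "Phit (card (L_verts k)) p s t"
proof -
  let ?n = "card (L_verts k)"
  have n: "1 \<le> ?n" by (rule card_L_pos)
  have a: "adj (Suc k) s t" using e LE_mem by blast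
  from top have "s = [] \<or> s = [0] \<or> s = [1] \<or> s = [2] \<or> t = [] \<or> t = [0] \<or> t = [1] \<or> t = [2]"
    unfolding Top_def by auto
  then show ?thesis
  proof (elim disjE)
    assume "s = []" then show ?thesis using a ls lt n by (auto simp: adj_nil Phit_def le2_iff)
  next
    assume "s = [0]" then show ?thesis using a ls lt n adj_single[of 0 k t] by (auto simp: Phit_def off_def)
  next
    assume "s = [1]" then show ?thesis using a ls lt n adj_single[of 1 k t] by (auto simp: Phit_def off_def)
  next
    assume "s = [2]" then show ?thesis using a ls lt n adj_single[of 2 k t] by (auto simp: Phit_def off_def)
  next
    assume "t = []" then show ?thesis using a ls lt n by (auto simp: adj_nil' Phit_def le2_iff)
  next
    assume "t = [0]" then show ?thesis using a ls lt n adj_single'[of 0 k s] by (auto simp: Phit_def off_def)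
  next
    assume "t = [1]" then show ?thesis using a ls lt n adj_single'[of 1 k s] by (auto simp: Phit_def off_def)
  next
    assume "t = [2]" then show ?thesis using a ls lt n adj_single'[of 2 k s] by (auto simp: Phit_def off_def)
  qed
qed

lemma topb_of:
  fixes \<Phi> :: "nat \<Rightarrow> nat \<Rightarrow> nat list \<Rightarrow> nat list \<Rightarrow> bool"
  assumes g: "good G"
    and form: "\<And>k p s t. {s,t} \<in> G (Suc k) \<Longrightarrow> lay (Suc k) s \<le> p \<Longrightarrow> \<not> lay (Suc k) t \<le> p \<Longrightarrow> s \<in> Top \<or> t \<in> Top
        \<Longrightarrow> \<Phi> (card (L_verts k)) p s t"
    and pair: "\<And>k p s t s' t'. \<Phi> (card (L_verts k)) p s t \<Longrightarrow> \<Phi> (card (L_verts k)) p s' t' \<Longrightarrow> s \<noteq> s' \<Longrightarrow> t \<noteq> t'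
        \<Longrightarrow> {s,t'} \<in> G (Suc k) \<or> {s',t} \<in> G (Suc k)"
  shows "topb G"
  unfolding topb_def
proof (intro allI impI)
  fix k p M
  let ?S = "{v\<in>L_verts (Suc k). lay (Suc k) v \<le> p}" and ?T = "{v\<in>L_verts (Suc k). \<not> lay (Suc k) v \<le> p}"
  assume im: "induced_matching (bip_edges (G (Suc k)) ?S ?T) M"
  have finF: "finite (bip_edges (G (Suc k)) ?S ?T)" using good_finite[OF g] unfolding bip_edges_def by auto
  have finA: "finite {e\<in>M. e \<inter> Top \<noteq> {}}" using im_finite[OF finF im] by simp
  have "\<forall>e\<in>{e\<in>M. e \<inter> Top \<noteq> {}}. \<forall>f\<in>{e\<in>M. e \<inter> Top \<noteq> {}}. e = f"
  proof (intro ballI, rule ccontr)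
    fix e f assume eA: "e \<in> {e\<in>M. e \<inter> Top \<noteq> {}}" and fA: "f \<in> {e\<in>M. e \<inter> Top \<noteq> {}}" and ne: "e \<noteq> f"
    have eM: "e \<in> M" and fM: "f \<in> M" using eA fA by auto
    obtain s t where st: "s \<in> ?S" "t \<in> ?T" "e = {s,t}" "e \<in> G (Suc k)"
      using im_D(1)[OF im] eM unfolding bip_edges_def by blast
    obtain s' t' where st': "s' \<in> ?S" "t' \<in> ?T" "f = {s',t'}" "f \<in> G (Suc k)"
      using im_D(1)[OF im] fM unfolding bip_edges_def by blast
    have P1: "\<Phi> (card (L_verts k)) p s t"
      using form[of s t k p] st eA by blast
    have P2: "\<Phi> (card (L_verts k)) p s' t'"
      using form[of s' t' k p] st' fA by blast
    have pr: "s \<noteq> s' \<and> t \<noteq> t' \<and> {s,t'} \<notin> G (Suc k) \<and> {s',t} \<notin> G (Suc k)"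
      using im_pair[OF im eM fM ne st(3) st'(3) st(1) st(2) st'(1) st'(2)] .
    show False using pair[OF P1 P2] pr by blast
  qed
  then show "card {e\<in>M. e \<inter> Top \<noteq> {}} \<le> 1"
    using card_le_Suc0_iff_eq[OF finA] by simp
qed

lemma tree_pair:
  assumes "Phit (card (L_verts k)) p s t" "Phit (card (L_verts k)) p s' t'" "s \<noteq> s'" "t \<noteq> t'"
  shows "{s,t'} \<in> L_edges (Suc k) \<or> {s',t} \<in> L_edges (Suc k)"
proof -
  have e0: "{[],[0]} \<in> L_edges (Suc k)" "{[0],[]} \<in> L_edges (Suc k)" by (simp_all add: LE_mem adj_nil adj_nil')
  have e1: "{[],[1]} \<in> L_edges (Suc k)" "{[1],[]} \<in> L_edges (Suc k)" by (simp_all add: LE_mem adj_nil adj_nil')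
  show ?thesis using assms e0 e1 unfolding Phit_def by (cases "p \<le> card (L_verts k) + 1"; auto)
qed

lemma topb_tree: "topb L_edges"
  by (rule topb_of[where \<Phi>=Phit, OF good_tree tree_form tree_pair])



lemma nontop: "u \<in> L_verts (Suc k) \<Longrightarrow> u \<notin> Top \<Longrightarrow> \<exists>i\<le>2. \<exists>u0\<in>L_verts k. u = i#0#u0"
  unfolding L_Suc_iff Top_def by (auto simp: le2_iff)

lemma adj_in: "adj n u v \<Longrightarrow> u \<in> L_verts n \<and> v \<in> L_verts n"
  unfolding adj_def by blast

lemma classes_tree: "classes L_edges"
  unfolding classes_def
proof (intro allI impI)
  fix k e assume e: "e \<in> L_edges (Suc k)"
  show "e \<inter> Top \<noteq> {} \<or> (\<exists>i\<le>2. e \<subseteq> (\<lambda>w. i#0#w) ` L_verts k)"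
  proof (cases "e \<inter> Top = {}")
    case True
    obtain u v where uv: "e = {u,v}" "adj (Suc k) u v" using LE_edge[OF e] by blast
    have "u \<notin> Top" "v \<notin> Top" using True uv by auto
    then obtain i u0 where i: "i \<le> 2" "u0 \<in> L_verts k" "u = i#0#u0" using nontop adj_in[OF uv(2)] by blast
    have "(\<exists>w0. v = i#0#w0 \<and> adj k u0 w0) \<or> (u0 = [] \<and> v = [i])" using adj_copy[OF i(1)] uv(2) i(3) by blast
    then obtain w0 where "v = i#0#w0" "w0 \<in> L_verts k"
      using \<open>v \<notin> Top\<close> i(1) adj_in unfolding Top_def by (auto simp: le2_iff)
    then have "e \<subseteq> (\<lambda>w. i#0#w) ` L_verts k" using uv i by auto
    then show ?thesis using i by blast
  qed simp
qed

lemma classes_sq: "classes (\<lambda>n. graph_square (L_verts n) (L_edges n))"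
  unfolding classes_def
proof (intro allI impI)
  fix k e assume e: "e \<in> graph_square (L_verts (Suc k)) (L_edges (Suc k))"
  show "e \<inter> Top \<noteq> {} \<or> (\<exists>i\<le>2. e \<subseteq> (\<lambda>w. i#0#w) ` L_verts k)"
  proof (cases "e \<inter> Top = {}")
    case True
    obtain u v where uv: "e = {u,v}" "u \<noteq> v" "u \<in> L_verts (Suc k)" "v \<in> L_verts (Suc k)" using sq_edge[OF e] by blast
    have ad: "adj (Suc k) u v \<or> (\<exists>z. adj (Suc k) u z \<and> adj (Suc k) z v)" using e uv sq_mem by blast
    have "u \<notin> Top" "v \<notin> Top" using True uv by auto
    then obtain i u0 where i: "i \<le> 2" "u0 \<in> L_verts k" "u = i#0#u0" using nontop uv by blast
    have "\<exists>w0\<in>L_verts k. v = i#0#w0"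
      using ad
    proof
      assume "adj (Suc k) u v"
      then have "(\<exists>w0. v = i#0#w0 \<and> adj k u0 w0) \<or> (u0 = [] \<and> v = [i])" using adj_copy[OF i(1)] i(3) by blast
      then show ?thesis using \<open>v \<notin> Top\<close> i(1) adj_in unfolding Top_def by (auto simp: le2_iff)
    next
      assume "\<exists>z. adj (Suc k) u z \<and> adj (Suc k) z v"
      then obtain z where z1: "adj (Suc k) u z" and z2: "adj (Suc k) z v" by blast
      have "(\<exists>z0. z = i#0#z0 \<and> adj k u0 z0) \<or> (u0 = [] \<and> z = [i])" using adj_copy[OF i(1)] z1 i(3) by blast
      then show ?thesis
      proof
        assume "\<exists>z0. z = i#0#z0 \<and> adj k u0 z0"
        then obtain z0 where "z = i#0#z0" by blast
        then have "(\<exists>w0. v = i#0#w0 \<and> adj k z0 w0) \<or> (z0 = [] \<and> v = [i])" using adj_copy[OF i(1)] z2 by blast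
        then show ?thesis using \<open>v \<notin> Top\<close> i(1) adj_in unfolding Top_def by (auto simp: le2_iff)
      next
        assume "u0 = [] \<and> z = [i]"
        then have "v = [] \<or> v = [i,0]" using adj_single[OF i(1)] z2 by blast
        then show ?thesis using \<open>v \<notin> Top\<close> unfolding Top_def by (auto intro: bexI[of _ "[]"])
      qed
    qed
    then have "e \<subseteq> (\<lambda>w. i#0#w) ` L_verts k" using uv i by auto
    then show ?thesis using i by blast
  qed simp
qed

lemma base_tree: "{[],[0]} \<in> L_edges 1"
  using LE_mem adj_nil[of 0 "[0]"] by simp

lemma base_sq: "{[],[0]} \<in> graph_square (L_verts 1) (L_edges 1)"
  using sq_mem[of "[]" "[0]" 1] adj_nil[of 0 "[0]"] by simp

theorem lmw_tree: "lmw (L_verts k) (L_edges k) = k"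
  by (rule lmw_gen[OF good_tree base_tree extra_tree classes_tree topb_tree])



abbreviation SQ :: "nat \<Rightarrow> nat list set set" where "SQ n \<equiv> graph_square (L_verts n) (L_edges n)"

definition Phis :: "nat \<Rightarrow> nat \<Rightarrow> nat list \<Rightarrow> nat list \<Rightarrow> bool" where
  "Phis n p s t \<longleftrightarrow> (p \<le> n+1 \<longrightarrow> s = [] \<or> t = [0])
     \<and> (n+2 \<le> p \<and> p \<le> 2*n+2 \<longrightarrow> s = [] \<or> t = [1] \<or> (s = [0] \<and> t = [2]))
     \<and> (p = 2*n+3 \<longrightarrow> t = [2] \<or> (s = [] \<and> t = [2,0]))
     \<and> (2*n+4 \<le> p \<longrightarrow> s = [2] \<or> (s = [] \<and> t = [2,0]))"

lemma sq_nbr_nil: assumes "{[], v} \<in> SQ (Suc k)" shows "(\<exists>j\<le>2. v = [j]) \<or> (\<exists>j\<le>2. v = [j,0])"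
proof -
  have "[] \<noteq> v" and h: "adj (Suc k) [] v \<or> (\<exists>z. adj (Suc k) [] z \<and> adj (Suc k) z v)" using assms sq_mem by blast+
  from h show ?thesis
  proof
    assume "adj (Suc k) [] v" then show ?thesis using adj_nil by blast
  next
    assume "\<exists>z. adj (Suc k) [] z \<and> adj (Suc k) z v"
    then obtain z where z1: "adj (Suc k) [] z" and z2: "adj (Suc k) z v" by blast
    then obtain j where j: "j \<le> 2" "z = [j]" using adj_nil by blast
    then have "v = [] \<or> v = [j,0]" using adj_single[OF j(1)] z2 by blast
    then show ?thesis using \<open>[] \<noteq> v\<close> j by blast
  qed
qed

lemma sq_nbr_single: assumes i: "i \<le> 2" and e: "{[i], v} \<in> SQ (Suc k)"
  shows "v = [] \<or> (\<exists>j\<le>2. v = [j] \<and> j \<noteq> i) \<or> (\<exists>w\<in>L_verts k. v = i#0#w)"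
proof -
  have ne: "[i] \<noteq> v" and h: "adj (Suc k) [i] v \<or> (\<exists>z. adj (Suc k) [i] z \<and> adj (Suc k) z v)" using e sq_mem by blast+
  from h show ?thesis
  proof
    assume "adj (Suc k) [i] v"
    then have "v = [] \<or> v = [i,0]" using adj_single[OF i] by blast
    then show ?thesis by (auto intro: bexI[of _ "[]"])
  next
    assume "\<exists>z. adj (Suc k) [i] z \<and> adj (Suc k) z v"
    then obtain z where z1: "adj (Suc k) [i] z" and z2: "adj (Suc k) z v" by blast
    then have "z = [] \<or> z = [i,0]" using adj_single[OF i] by blast
    then show ?thesis
    proof
      assume "z = []"
      then obtain j where "j \<le> 2" "v = [j]" using adj_nil z2 by blast
      then show ?thesis using ne by blast
    next
      assume "z = [i,0]"
      then have "(\<exists>w0. v = i#0#w0 \<and> adj k [] w0) \<or> ([] = ([]::nat list) \<and> v = [i])" using adj_copy[OF i, of k "[]" v] z2 by simp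
      then show ?thesis using ne adj_in by blast
    qed
  qed
qed

lemma sq_form:
  assumes e: "{s,t} \<in> SQ (Suc k)" and ls: "lay (Suc k) s \<le> p" and lt: "\<not> lay (Suc k) t \<le> p"
    and top: "s \<in> Top \<or> t \<in> Top"
  shows "Phis (card (L_verts k)) p s t"
proof -
  let ?n = "card (L_verts k)"
  have n: "1 \<le> ?n" by (rule card_L_pos)
  have e': "{t,s} \<in> SQ (Suc k)" using e by (simp add: insert_commute)
  from top have "s = [] \<or> (\<exists>i\<le>2. s = [i]) \<or> t = [] \<or> (\<exists>i\<le>2. t = [i])"
    unfolding Top_def by auto
  then show ?thesis
  proof (elim disjE exE conjE)
    assume s: "s = []"
    then have "(\<exists>j\<le>2. t = [j]) \<or> (\<exists>j\<le>2. t = [j,0])" using sq_nbr_nil e by blast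
    then show ?thesis using s ls lt n by (auto simp: Phis_def le2_iff off_def)
  next
    fix i assume i: "i \<le> 2" and s: "s = [i]"
    have "t = [] \<or> (\<exists>j\<le>2. t = [j] \<and> j \<noteq> i) \<or> (\<exists>w\<in>L_verts k. t = i#0#w)" using sq_nbr_single[OF i] e s by blast
    then show ?thesis
    proof (elim disjE bexE)
      assume "t = []" then show ?thesis using s ls lt n i by (auto simp: Phis_def le2_iff)
    next
      assume "\<exists>j\<le>2. t = [j] \<and> j \<noteq> i" then show ?thesis using s ls lt n i by (auto simp: Phis_def le2_iff)
    next
      fix w assume w: "w \<in> L_verts k" "t = i#0#w"
      have "1 \<le> lay k w \<and> lay k w \<le> ?n" using lay_range[OF w(1)] .
      then show ?thesis using s w ls lt n i by (auto simp: Phis_def le2_iff off_def)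
    qed
  next
    assume t: "t = []"
    then have "(\<exists>j\<le>2. s = [j]) \<or> (\<exists>j\<le>2. s = [j,0])" using sq_nbr_nil e' by blast
    then show ?thesis using t ls lt n by (auto simp: Phis_def le2_iff off_def)
  next
    fix i assume i: "i \<le> 2" and t: "t = [i]"
    have "s = [] \<or> (\<exists>j\<le>2. s = [j] \<and> j \<noteq> i) \<or> (\<exists>w\<in>L_verts k. s = i#0#w)" using sq_nbr_single[OF i] e' t by blast
    then show ?thesis
    proof (elim disjE bexE)
      assume "s = []" then show ?thesis using t ls lt n i by (auto simp: Phis_def le2_iff)
    next
      assume "\<exists>j\<le>2. s = [j] \<and> j \<noteq> i" then show ?thesis using t ls lt n i by (auto simp: Phis_def le2_iff)
    next
      fix w assume w: "w \<in> L_verts k" "s = i#0#w"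
      have "1 \<le> lay k w \<and> lay k w \<le> ?n" using lay_range[OF w(1)] .
      then show ?thesis using t w ls lt n i by (auto simp: Phis_def le2_iff off_def)
    qed
  qed
qed

lemma sq_pair:
  assumes P1: "Phis (card (L_verts k)) p s t" and P2: "Phis (card (L_verts k)) p s' t'" and ne: "s \<noteq> s'" "t \<noteq> t'"
  shows "{s,t'} \<in> SQ (Suc k) \<or> {s',t} \<in> SQ (Suc k)"
proof -
  let ?n = "card (L_verts k)"
  have a0: "adj (Suc k) [] [j]" if "j \<le> 2" for j using that adj_nil by blast
  have m0: "{[],[j]} \<in> SQ (Suc k)" if "j \<le> 2" for j by (simp add: sq_mem a0[OF that])
  have m01: "{[0],[1]} \<in> SQ (Suc k)"
  proof -
    have "adj (Suc k) [0] []" "adj (Suc k) [] [1]" by (simp_all add: adj_nil adj_nil')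
    then show ?thesis by (simp add: sq_mem) blast
  qed
  have m22: "{[2],[2,0]} \<in> SQ (Suc k)"
  proof -
    have "adj (Suc k) [2] [2,0]" using adj_single[of 2 k "[2,0]"] by simp
    then show ?thesis by (simp add: sq_mem)
  qed
  have mm: "{[],[0]} \<in> SQ (Suc k)" "{[],[1]} \<in> SQ (Suc k)" "{[],[2]} \<in> SQ (Suc k)"
    "{[0],[]} \<in> SQ (Suc k)" "{[1],[]} \<in> SQ (Suc k)" "{[2],[]} \<in> SQ (Suc k)"
    "{[0],[1]} \<in> SQ (Suc k)" "{[1],[0]} \<in> SQ (Suc k)" "{[2],[2,0]} \<in> SQ (Suc k)" "{[2,0],[2]} \<in> SQ (Suc k)"
    using m0[of 0] m0[of 1] m0[of 2] m01 m22 by (simp_all add: insert_commute)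
  consider "p \<le> ?n + 1" | "?n + 2 \<le> p \<and> p \<le> 2*?n+2" | "p = 2*?n+3" | "2*?n+4 \<le> p" by linarith
  then show ?thesis
  proof cases
    case 1 then show ?thesis using P1 P2 ne mm unfolding Phis_def by auto
  next
    case 2 then show ?thesis using P1 P2 ne mm unfolding Phis_def by auto
  next
    case 3 then show ?thesis using P1 P2 ne mm unfolding Phis_def by auto
  next
    case 4 then show ?thesis using P1 P2 ne mm unfolding Phis_def by auto
  qed
qed

lemma topb_sq: "topb SQ"
  by (rule topb_of[where \<Phi>=Phis, OF good_sq sq_form sq_pair])

theorem lmw_sq: "lmw (L_verts k) (SQ k) = k"
  by (rule lmw_gen[OF good_sq base_sq extra_sq classes_sq topb_sq])


theorem mainTheorem3:
  fixes k :: nat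
  shows "lmw (L_verts k) (L_edges k) = k \<and>
         lmw (L_verts k) (graph_square (L_verts k) (L_edges k)) = k"
  using lmw_tree lmw_sq by blast

end
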